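(* Let $R=R(\dot R,S,L)$ be an extended affine root system with $\Lambda=\langle S\rangle$, let $U$ be a subgroup of $\langle R^0\rangle$ and $T=(\dot R+U)\cap R^\times$. Then $\tilde R_T$ is a closed canonical subsystem of $R$ provided one of the following holds: (1) $\dot R$ is not of type $A_1$ or $B_\ell$; (2) $\dot R$ is of type $A_1$, and either $S$ is a lattice or $\mathrm{ind}(S)=\mathrm{rank}\,\Lambda$; (3) $\dot R$ is of type $B_\ell$, and either $S$ is a lattice or $\mathrm{ind}(S_1)=\mathrm{rank}\,\Lambda_1$.
   Context: An extended affine root system (EARS) is a triple $(R,(\cdot,\cdot),\mathcal V)$ with $\mathcal V$ a finite-dimensional real vector space, $(\cdot,\cdot)$ symmetric positive semidefinite, $R\subseteq\mathcal V$, such that with $R^\times=\{\alpha\in R:(\alpha,\alpha)\neq0\}$, $R^0=R\setminus R^\times$: $0\in R$; $R=-R$; $R$ spans $\mathcal V$; $\alpha\in R^\times\Rightarrow2\alpha\notin R$; $R$ discrete; for $\alpha\in R^\times,\beta\in R$ there are integers $d,u\ge0$ with $(\beta+\mathbb Z\alpha)\cap R=\{\beta-d\alpha,\dots,\beta+u\alpha\}$ and $2(\beta,\alpha)/(\alpha,\alpha)=d-u$; every $\sigma\in R^0$ is non-isolated ($\alpha+\sigma\in R$ for some $\alpha\in R^\times$); $R^\times$ is connected (not a union of two nonempty mutually orthogonal subsets). Let $\mathcal V^0=\mathrm{span}_{\mathbb R}R^0$; the image of $R$ in $\mathcal V/\mathcal V^0$ is an irreducible finite root system, assumed reduced, giving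 the type of $R$. $\langle X\rangle$ denotes the additive subgroup generated by $X$. Structure: there are a finite root system $\dot R\subseteq R$ (containing $0$, mapping bijectively onto $R$ modulo $\mathcal V^0$) and semilattices $S,L\subseteq\mathcal V^0$ with $R=(S+S)\cup(\dot R_{sh}+S)\cup(\dot R_{lg}+L)$, $R^0=S+S$ ($\dot R_{sh},\dot R_{lg}$ the nonzero short/long roots of $\dot R$; all nonzero roots short if simply laced, last term then empty); write $R=R(\dot R,S,L)$. A semilattice $S$ in $\Lambda=\langle S\rangle$ has the form $S=\bigcup_{i=0}^m(\tau_i+2\Lambda)$, $\tau_0=0$, $\tau_i$ representatives of distinct cosets of $2\Lambda$; $\mathrm{ind}(S)=m$; $S$ is a lattice iff $S=\Lambda$. In type $B_\ell$ there are lattices with $\Lambda=\Lambda_1\oplus\Lambda_2$ and a semilattice $S_1$ in $\Lambda_1$ with $S=S_1\oplus\Lambda_2$; $\Lambda_1,S_1$ refer to such a decomposition. For a nonempty subset $T\subseteq R^\times$: $\tilde R_T^\times=\langle T\rangle\cap R^\times$, $\tilde R_T^0=\mathcal V^0\cap(\tilde R_T^\times-\tilde R_T^\times)$, $\tilde R_T=\tilde R_T^\times\cup\tilde R_T^0$, with the form restricted to $\mathrm{span}_{\mathbb R}T$. A subsystem of $R$ is $R'\subseteq R$ such that $(R',(\cdot,\cdot)|,\mathrm{span}_{\mathbb R}R')$ is an EARS; closed means $\alpha,\beta\in R'$, $\alpha+\beta\in R\Rightarrow\alpha+\beta\in R'$; canonical means $R'=(S'+S')\cup(\dot R_{sh}+S')\cup(\dot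 R_{lg}+L')$ for some semilattices $S',L'$ (same $\dot R$). *)

theory Defs
  imports "HOL-Analysis.Analysis"
begin

definition zspan :: "'a::real_vector set \<Rightarrow> 'a set" where
  "zspan X = {(\<Sum>x\<in>F. of_int (c x) *\<^sub>R x) | F c. finite F \<and> F \<subseteq> X}"

definition subgrp :: "'a::real_vector set \<Rightarrow> bool" where
  "subgrp U \<longleftrightarrow> 0 \<in> U \<and> (\<forall>x\<in>U. \<forall>y\<in>U. x - y \<in> U)"

definition msum :: "'a::real_vector set \<Rightarrow> 'a set \<Rightarrow> 'a set" where
  "msum A B = {a + b | a b. a \<in> A \<and> b \<in> B}"

definition mdiff :: "'a::real_vector set \<Rightarrow> 'a set \<Rightarrow> 'a set" where
  "mdiff A B = {a - b | a b. a \<in> A \<and> b \<in> B}"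

definition zindep :: "'a::real_vector set \<Rightarrow> bool" where
  "zindep X \<longleftrightarrow> (\<forall>c::'a \<Rightarrow> int. (\<Sum>x\<in>X. of_int (c x) *\<^sub>R x) = 0 \<longrightarrow> (\<forall>x\<in>X. c x = 0))"

definition zrank :: "'a::real_vector set \<Rightarrow> nat" where
  "zrank G = Sup {card X | X. finite X \<and> X \<subseteq> G \<and> zindep X}"

text \<open>A lattice (free abelian group of finite rank): finitely generated subgroup of the
  real vector space (torsion-free, hence free).\<close>
definition fg_lattice :: "'a::real_vector set \<Rightarrow> bool" where
  "fg_lattice G \<longleftrightarrow> subgrp G \<and> (\<exists>F. finite F \<and> zspan F = G)"

text \<open>A semilattice S in the lattice \<Lambda> = zspan S: a union of cosets of 2\<Lambda> containing 2\<Lambda>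
  (i.e. S = union of (tau_i + 2 Lambda), tau_0 = 0).\<close>
definition semilattice :: "'a::real_vector set \<Rightarrow> bool" where
  "semilattice S \<longleftrightarrow> fg_lattice (zspan S) \<and> 0 \<in> S \<and>
     (\<forall>s\<in>S. \<forall>x\<in>zspan S. s + 2 *\<^sub>R x \<in> S)"

text \<open>ind(S) = m, where S is the union of the m+1 distinct cosets tau_i + 2\<Lambda>.\<close>
definition sl_ind :: "'a::real_vector set \<Rightarrow> nat" where
  "sl_ind S = card {{s + 2 *\<^sub>R x | x. x \<in> zspan S} | s. s \<in> S} - 1"

definition is_lattice :: "'a::real_vector set \<Rightarrow> bool" where
  "is_lattice S \<longleftrightarrow> S = zspan S"

definition psd_form :: "('a::real_vector \<Rightarrow> 'a \<Rightarrow> real) \<Rightarrow> bool" where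
  "psd_form B \<longleftrightarrow> bilinear B \<and> (\<forall>x y. B x y = B y x) \<and> (\<forall>x. 0 \<le> B x x)"

definition Rx :: "('a \<Rightarrow> 'a \<Rightarrow> real) \<Rightarrow> 'a set \<Rightarrow> 'a set" where
  "Rx B R = {a \<in> R. B a a \<noteq> 0}"

definition R0 :: "('a \<Rightarrow> 'a \<Rightarrow> real) \<Rightarrow> 'a set \<Rightarrow> 'a set" where
  "R0 B R = R - Rx B R"

definition V0 :: "('a::real_vector \<Rightarrow> 'a \<Rightarrow> real) \<Rightarrow> 'a set \<Rightarrow> 'a set" where
  "V0 B R = span (R0 B R)"

definition discrete_set :: "'a::metric_space set \<Rightarrow> bool" where
  "discrete_set R \<longleftrightarrow> (\<forall>x\<in>R. \<exists>e>0. \<forall>y\<in>R. dist y x < e \<longrightarrow> y = x)"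

text \<open>(R, B restricted, span R) is an extended affine root system.  The ambient
  vector space is V = span R (inside the euclidean space 'a, with its natural topology).\<close>
definition ears :: "('a::euclidean_space \<Rightarrow> 'a \<Rightarrow> real) \<Rightarrow> 'a set \<Rightarrow> bool" where
  "ears B R \<longleftrightarrow>
     0 \<in> R \<and>
     uminus ` R = R \<and>
     (\<forall>a\<in>Rx B R. 2 *\<^sub>R a \<notin> R) \<and>
     discrete_set R \<and>
     (\<forall>a\<in>Rx B R. \<forall>b\<in>R. \<exists>d u :: nat.
        {k::int. b + of_int k *\<^sub>R a \<in> R} = {- int d .. int u} \<and>
        2 * B b a / B a a = real d - real u) \<and>
     (\<forall>s\<in>R0 B R. \<exists>a\<in>Rx B R. a + s \<in> R) \<and>
     \<not> (\<exists>A C. A \<noteq> {} \<and> C \<noteq> {} \<and> A \<union> C = Rx B R \<and> (\<forall>a\<in>A. \<forall>c\<in>C. B a c = 0))"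

definition finite_root_system :: "('a::real_vector \<Rightarrow> 'a \<Rightarrow> real) \<Rightarrow> 'a set \<Rightarrow> bool" where
  "finite_root_system B D \<longleftrightarrow>
     finite D \<and> 0 \<in> D \<and>
     (\<forall>x\<in>span D. x \<noteq> 0 \<longrightarrow> 0 < B x x) \<and>
     (\<forall>a\<in>D - {0}. \<forall>b\<in>D. 2 * B b a / B a a \<in> \<int> \<and> b - (2 * B b a / B a a) *\<^sub>R a \<in> D)"

definition reduced_rs :: "'a::real_vector set \<Rightarrow> bool" where
  "reduced_rs D \<longleftrightarrow> (\<forall>a\<in>D - {0}. \<forall>c::real. c *\<^sub>R a \<in> D - {0} \<longrightarrow> c = 1 \<or> c = -1)"

text \<open>Nonzero short roots; all nonzero roots are short in the simply laced case.\<close>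
definition short_roots :: "('a::real_vector \<Rightarrow> 'a \<Rightarrow> real) \<Rightarrow> 'a set \<Rightarrow> 'a set" where
  "short_roots B D = {a \<in> D - {0}. \<forall>b\<in>D - {0}. B a a \<le> B b b}"

definition long_roots :: "('a::real_vector \<Rightarrow> 'a \<Rightarrow> real) \<Rightarrow> 'a set \<Rightarrow> 'a set" where
  "long_roots B D = (D - {0}) - short_roots B D"

definition type_A1 :: "'a::real_vector set \<Rightarrow> bool" where
  "type_A1 D \<longleftrightarrow> (\<exists>a. a \<noteq> 0 \<and> D = {0, a, - a})"

text \<open>Type B_l (l \<ge> 2): there is a linear isomorphism of span D onto R^l carrying D
  (with 0) to the standard B_l = {0} \<union> {\<pm>e_i} \<union> {\<pm>e_i \<pm> e_j, i \<noteq> j};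
  equivalently D has this form for a linearly independent family e_0..e_(l-1).\<close>
definition type_B :: "'a::real_vector set \<Rightarrow> bool" where
  "type_B D \<longleftrightarrow> (\<exists>l::nat. \<exists>e::nat \<Rightarrow> 'a. 2 \<le> l \<and> inj_on e {..<l} \<and>
      independent (e ` {..<l}) \<and>
      D = {0} \<union> {s *\<^sub>R e i | s i. s \<in> {1, -1} \<and> i < l}
            \<union> {s *\<^sub>R e i + t *\<^sub>R e j | s t i j. s \<in> {1, -1} \<and> t \<in> {1, -1} \<and> i < l \<and> j < l \<and> i \<noteq> j})"

definition tildeR :: "('a::real_vector \<Rightarrow> 'a \<Rightarrow> real) \<Rightarrow> 'a set \<Rightarrow> 'a set \<Rightarrow> 'a set" where
  "tildeR B R T =
     (let X = zspan T \<inter> Rx B R in X \<union> (V0 B R \<inter> mdiff X X))"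

definition subsystem :: "('a::euclidean_space \<Rightarrow> 'a \<Rightarrow> real) \<Rightarrow> 'a set \<Rightarrow> 'a set \<Rightarrow> bool" where
  "subsystem B R R' \<longleftrightarrow> R' \<subseteq> R \<and> ears B R'"

definition closed_sub :: "'a::real_vector set \<Rightarrow> 'a set \<Rightarrow> bool" where
  "closed_sub R R' \<longleftrightarrow> (\<forall>a\<in>R'. \<forall>b\<in>R'. a + b \<in> R \<longrightarrow> a + b \<in> R')"

definition RSL :: "('a::real_vector \<Rightarrow> 'a \<Rightarrow> real) \<Rightarrow> 'a set \<Rightarrow> 'a set \<Rightarrow> 'a set \<Rightarrow> 'a set" where
  "RSL B D S L = msum S S \<union> msum (short_roots B D) S \<union> msum (long_roots B D) L"

definition canonical_sub :: "('a::real_vector \<Rightarrow> 'a \<Rightarrow> real) \<Rightarrow> 'a set \<Rightarrow> 'a set \<Rightarrow> bool" where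
  "canonical_sub B D R' \<longleftrightarrow> (\<exists>S' L'. semilattice S' \<and> semilattice L' \<and> R' = RSL B D S' L')"

end

theory Submission
  imports Defs
begin

lemma zspan_rep:
  assumes "finite F"
  shows "zspan F = {(\<Sum>x\<in>F. of_int (c x) *\<^sub>R x) | c. True}"
proof
  show "zspan F \<subseteq> {(\<Sum>x\<in>F. of_int (c x) *\<^sub>R x) | c. True}"
  proof
    fix v assume "v \<in> zspan F"
    then obtain G c where G: "finite G" "G \<subseteq> F" "v = (\<Sum>x\<in>G. of_int (c x) *\<^sub>R x)"
      unfolding zspan_def by blast
    define c' where "c' x = (if x \<in> G then c x else 0)" for x
    have "(\<Sum>x\<in>F. of_int (c' x) *\<^sub>R x) = (\<Sum>x\<in>G. of_int (c' x) *\<^sub>R x)"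
      by (rule sum.mono_neutral_right) (use assms G in \<open>simp_all add: c'_def\<close>)
    also have "\<dots> = v" unfolding G(3) by (rule sum.cong) (simp_all add: c'_def)
    finally have "v = (\<Sum>x\<in>F. of_int (c' x) *\<^sub>R x)" by simp
    thus "v \<in> {(\<Sum>x\<in>F. of_int (c x) *\<^sub>R x) | c. True}" by blast
  qed
  show "{(\<Sum>x\<in>F. of_int (c x) *\<^sub>R x) | c. True} \<subseteq> zspan F"
    using assms unfolding zspan_def by blast
qed

lemma zspan_0[simp]: "0 \<in> zspan X"
  unfolding zspan_def by (rule CollectI, rule exI[of _ "{}"]) auto

lemma zspan_empty[simp]: "zspan {} = {0}"
  unfolding zspan_def by auto

lemma zspan_add:
  assumes "a \<in> zspan X" "b \<in> zspan X" shows "a + b \<in> zspan X"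
proof -
  obtain F c where F: "finite F" "F \<subseteq> X" "a = (\<Sum>x\<in>F. of_int (c x) *\<^sub>R x)"
    using assms(1) unfolding zspan_def by blast
  obtain G d where G: "finite G" "G \<subseteq> X" "b = (\<Sum>x\<in>G. of_int (d x) *\<^sub>R x)"
    using assms(2) unfolding zspan_def by blast
  have fu: "finite (F \<union> G)" using F G by auto
  have "a \<in> zspan (F \<union> G)" using F unfolding zspan_def by blast
  then obtain c' where c': "a = (\<Sum>x\<in>F \<union> G. of_int (c' x) *\<^sub>R x)"
    using zspan_rep[OF fu] by blast
  have "b \<in> zspan (F \<union> G)" using G unfolding zspan_def by blast
  then obtain d' where d': "b = (\<Sum>x\<in>F \<union> G. of_int (d' x) *\<^sub>R x)"
    using zspan_rep[OF fu] by blast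
  have "a + b = (\<Sum>x\<in>F \<union> G. of_int (c' x + d' x) *\<^sub>R x)"
    by (simp add: c' d' sum.distrib[symmetric] scaleR_add_left)
  thus ?thesis unfolding zspan_def
    by (intro CollectI exI[of _ "F \<union> G"] exI[of _ "\<lambda>x. c' x + d' x"]) (use fu F G in auto)
qed

lemma zspan_smult:
  assumes "a \<in> zspan X" shows "of_int k *\<^sub>R a \<in> zspan X"
proof -
  obtain F c where F: "finite F" "F \<subseteq> X" "a = (\<Sum>x\<in>F. of_int (c x) *\<^sub>R x)"
    using assms(1) unfolding zspan_def by blast
  have "of_int k *\<^sub>R a = (\<Sum>x\<in>F. of_int (k * c x) *\<^sub>R x)"
    by (simp add: F scaleR_sum_right)
  thus ?thesis unfolding zspan_def
    by (intro CollectI exI[of _ F] exI[of _ "\<lambda>x. k * c x"]) (use F in auto)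
qed

lemma zspan_neg: "a \<in> zspan X \<Longrightarrow> - a \<in> zspan X"
  using zspan_smult[of a X "-1"] by simp

lemma zspan_diff: "a \<in> zspan X \<Longrightarrow> b \<in> zspan X \<Longrightarrow> a - b \<in> zspan X"
  using zspan_add[of a X "-b"] zspan_neg[of b X] by simp

lemma zspan_2: "a \<in> zspan X \<Longrightarrow> 2 *\<^sub>R a \<in> zspan X"
  using zspan_smult[of a X 2] by simp

lemma zspan_sup: "x \<in> X \<Longrightarrow> x \<in> zspan X"
  unfolding zspan_def by (rule CollectI, rule exI[of _ "{x}"], rule exI[of _ "\<lambda>_. 1"]) auto

lemma zspan_mono: "X \<subseteq> Y \<Longrightarrow> zspan X \<subseteq> zspan Y"
  unfolding zspan_def by blast

lemma subgrp_zspan: "subgrp (zspan X)"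
  unfolding subgrp_def using zspan_diff by auto

lemma subgrp_add: "subgrp H \<Longrightarrow> a \<in> H \<Longrightarrow> b \<in> H \<Longrightarrow> a + b \<in> H"
  unfolding subgrp_def by (metis diff_0 diff_minus_eq_add)

lemma subgrp_neg: "subgrp H \<Longrightarrow> a \<in> H \<Longrightarrow> - a \<in> H"
  unfolding subgrp_def by (metis diff_0)

lemma subgrp_0: "subgrp H \<Longrightarrow> 0 \<in> H"
  unfolding subgrp_def by auto

lemma subgrp_diff: "subgrp H \<Longrightarrow> a \<in> H \<Longrightarrow> b \<in> H \<Longrightarrow> a - b \<in> H"
  unfolding subgrp_def by auto

lemma subgrp_nat_mult: "subgrp H \<Longrightarrow> a \<in> H \<Longrightarrow> of_nat n *\<^sub>R a \<in> H"
  by (induction n) (auto simp: subgrp_0 scaleR_add_left intro: subgrp_add)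

lemma subgrp_smult:
  assumes h: "subgrp H" "a \<in> H" shows "of_int k *\<^sub>R a \<in> H"
proof (cases "k \<ge> 0")
  case True
  have e: "(of_int k :: real) = of_nat (nat k)" using True by simp
  show ?thesis unfolding e using subgrp_nat_mult[OF h] .
next
  case False
  have e: "(of_int k :: real) = - of_nat (nat (-k))" using False by simp
  have "of_nat (nat (-k)) *\<^sub>R a \<in> H" using subgrp_nat_mult[OF h] by blast
  hence "- (of_nat (nat (-k)) *\<^sub>R a) \<in> H" using subgrp_neg h by blast
  thus ?thesis unfolding e by (simp only: scaleR_minus_left)
qed

lemma subgrp_sum:
  assumes "subgrp H" "finite F" "\<And>x. x \<in> F \<Longrightarrow> f x \<in> H" shows "sum f F \<in> H"
  using assms(2,3) by (induction F rule: finite_induct) (auto simp: subgrp_0[OF assms(1)] intro: subgrp_add[OF assms(1)])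

lemma zspan_least: "subgrp H \<Longrightarrow> X \<subseteq> H \<Longrightarrow> zspan X \<subseteq> H"
  unfolding zspan_def by (auto intro!: subgrp_sum subgrp_smult)

lemma zspan_zspan: "zspan (zspan X) = zspan X"
  by (rule antisym[OF zspan_least[OF subgrp_zspan subset_refl] zspan_mono]) (auto intro: zspan_sup)

lemma zspan_sum_image:
  "finite F \<Longrightarrow> (\<Sum>x\<in>F. of_int (c x) *\<^sub>R f x) \<in> zspan (f ` F)"
  by (rule subgrp_sum[OF subgrp_zspan]) (auto intro!: zspan_smult intro: zspan_sup)

lemma zspan_subgrp_eq: "subgrp H \<Longrightarrow> zspan H = H"
  by (simp add: subset_antisym subsetI zspan_least zspan_sup)

lemma zindep_subset:
  assumes "finite X" "zindep X" "Y \<subseteq> X" shows "zindep Y"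
  unfolding zindep_def
proof (intro allI impI ballI)
  fix c :: "'a \<Rightarrow> int" and y assume s: "(\<Sum>x\<in>Y. of_int (c x) *\<^sub>R x) = 0" and y: "y \<in> Y"
  define c' where "c' x = (if x \<in> Y then c x else 0)" for x
  have "(\<Sum>x\<in>X. of_int (c' x) *\<^sub>R x) = (\<Sum>x\<in>Y. of_int (c' x) *\<^sub>R x)"
    by (rule sum.mono_neutral_right) (use assms in \<open>simp_all add: c'_def\<close>)
  also have "\<dots> = 0" unfolding s[symmetric] by (rule sum.cong) (simp_all add: c'_def)
  finally have "\<forall>x\<in>X. c' x = 0" using assms(2) unfolding zindep_def by blast
  hence "c' y = 0" using y assms(3) by blast
  thus "c y = 0" using y by (simp add: c'_def)
qed

lemma zindep_insert_coef:
  assumes "finite F" "g \<notin> F" "zindep (insert g F)" "of_int k *\<^sub>R g \<in> zspan F"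
  shows "k = 0"
proof -
  obtain c where c: "of_int k *\<^sub>R g = (\<Sum>x\<in>F. of_int (c x) *\<^sub>R x)"
    using assms(4) zspan_rep[OF assms(1)] by blast
  define c' where "c' x = (if x = g then k else - c x)" for x
  have "(\<Sum>x\<in>insert g F. of_int (c' x) *\<^sub>R x) = of_int k *\<^sub>R g + (\<Sum>x\<in>F. of_int (c' x) *\<^sub>R x)"
    using assms(1,2) by (simp add: c'_def)
  also have "(\<Sum>x\<in>F. of_int (c' x) *\<^sub>R x) = - (\<Sum>x\<in>F. of_int (c x) *\<^sub>R x)"
    unfolding sum_negf[symmetric] by (rule sum.cong) (use assms(2) in \<open>auto simp: c'_def\<close>)
  finally have "(\<Sum>x\<in>insert g F. of_int (c' x) *\<^sub>R x) = 0" using c by simp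
  hence "c' g = 0" using assms(3) unfolding zindep_def by blast
  thus ?thesis by (simp add: c'_def)
qed

lemma zspan_insert:
  "zspan (insert g F) = {of_int k *\<^sub>R g + f | k f. f \<in> zspan F}"
proof
  let ?M = "{of_int k *\<^sub>R g + f | k f. f \<in> zspan F}"
  have sg: "subgrp ?M" unfolding subgrp_def
  proof (intro conjI ballI)
    show "0 \<in> ?M" by (rule CollectI, intro exI[of _ 0] exI[of _ 0]) simp
    fix x y assume "x \<in> ?M" "y \<in> ?M"
    then obtain k1 f1 k2 f2 where "x = of_int k1 *\<^sub>R g + f1" "f1 \<in> zspan F"
      "y = of_int k2 *\<^sub>R g + f2" "f2 \<in> zspan F" by blast
    hence "x - y = of_int (k1 - k2) *\<^sub>R g + (f1 - f2) \<and> f1 - f2 \<in> zspan F"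
      by (simp add: zspan_diff algebra_simps)
    thus "x - y \<in> ?M" by blast
  qed
  have "insert g F \<subseteq> ?M"
  proof
    fix x assume "x \<in> insert g F"
    then consider "x = g" | "x \<in> F" by blast
    thus "x \<in> ?M"
    proof cases
      case 1 thus ?thesis by (intro CollectI exI[of _ 1] exI[of _ 0]) simp
    next
      case 2 thus ?thesis by (intro CollectI exI[of _ 0] exI[of _ x]) (simp add: zspan_sup)
    qed
  qed
  thus "zspan (insert g F) \<subseteq> ?M" using zspan_least[OF sg] by blast
  show "?M \<subseteq> zspan (insert g F)"
  proof
    fix x assume "x \<in> ?M"
    then obtain k f where x: "x = of_int k *\<^sub>R g + f" "f \<in> zspan F" by blast
    have "of_int k *\<^sub>R g \<in> zspan (insert g F)" by (rule zspan_smult, rule zspan_sup) simp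
    moreover have "f \<in> zspan (insert g F)" using x(2) zspan_mono[of F "insert g F"] by blast
    ultimately show "x \<in> zspan (insert g F)" unfolding x(1) by (rule zspan_add)
  qed
qed

lemma embed_indep:
  fixes G :: "'a::real_vector set"
  assumes "finite G"
  shows "\<exists>B. finite B \<and> zindep B \<and> zspan G \<subseteq> zspan B \<and> card B \<le> card G"
  using assms
proof (induction "card G" arbitrary: G rule: less_induct)
  case less
  show ?case
  proof (cases "zindep G")
    case True thus ?thesis using less.prems by blast
  next
    case False
    then obtain c x0 where c: "(\<Sum>x\<in>G. of_int (c x) *\<^sub>R x) = 0" "x0 \<in> G" "c x0 \<noteq> 0"
      unfolding zindep_def by blast
    define f :: "'a \<Rightarrow> 'a" where "f x = (1 / of_int (c x0)) *\<^sub>R x" for x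
    define G' where "G' = f ` (G - {x0})"
    have fin: "finite G'" using less.prems by (simp add: G'_def)
    have "card G' \<le> card (G - {x0})" unfolding G'_def by (rule card_image_le) (use less.prems in simp)
    also have "\<dots> < card G" using less.prems c(2) by (meson card_Diff1_less)
    finally obtain B where B: "finite B" "zindep B" "zspan G' \<subseteq> zspan B" "card B \<le> card G'"
      using less.hyps fin by blast
    have "G \<subseteq> zspan G'"
    proof
      fix x assume x: "x \<in> G"
      show "x \<in> zspan G'"
      proof (cases "x = x0")
        case False
        have "f x \<in> zspan G'" using x False by (auto simp: G'_def intro: zspan_sup)
        hence "of_int (c x0) *\<^sub>R f x \<in> zspan G'" by (rule zspan_smult)
        thus ?thesis using c(3) by (simp add: f_def)
      next
        case True
        have "(\<Sum>x\<in>G. of_int (c x) *\<^sub>R x) = of_int (c x0) *\<^sub>R x0 + (\<Sum>x\<in>G - {x0}. of_int (c x) *\<^sub>R x)"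
          using less.prems c(2) by (simp add: sum.remove)
        hence e: "of_int (c x0) *\<^sub>R x0 = - (\<Sum>x\<in>G - {x0}. of_int (c x) *\<^sub>R x)"
          using c(1) by (simp add: eq_neg_iff_add_eq_0)
        have "x0 = (1 / of_int (c x0)) *\<^sub>R (of_int (c x0) *\<^sub>R x0)" using c(3) by simp
        also have "\<dots> = (\<Sum>x\<in>G - {x0}. of_int (- c x) *\<^sub>R f x)"
          unfolding e f_def by (simp add: scaleR_sum_right sum_negf[symmetric])
        also have "\<dots> \<in> zspan G'" unfolding G'_def
          by (rule zspan_sum_image) (use less.prems in simp)
        finally show ?thesis using True by simp
      qed
    qed
    hence "zspan G \<subseteq> zspan G'" using zspan_least[OF subgrp_zspan] by blast
    thus ?thesis using B \<open>card G' \<le> card (G - {x0})\<close> \<open>card (G - {x0}) < card G\<close>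
      by (intro exI[of _ B]) auto
  qed
qed

lemma subgroup_of_indep:
  assumes "finite B" "zindep B" "subgrp H" "H \<subseteq> zspan B"
  shows "\<exists>B'. finite B' \<and> zindep B' \<and> zspan B' = H \<and> card B' \<le> card B"
  using assms
proof (induction B arbitrary: H rule: finite_induct)
  case empty
  hence "H = {0}" using subgrp_0[OF empty.prems(2)] by auto
  thus ?case by (intro exI[of _ "{}"]) (auto simp: zindep_def)
next
  case (insert g F)
  have indF: "zindep F" using zindep_subset[of "insert g F" F] insert by auto
  let ?H' = "H \<inter> zspan F"
  have sgH': "subgrp ?H'" using insert.prems(2) subgrp_zspan[of F]
    unfolding subgrp_def by auto
  obtain B'' where B'': "finite B''" "zindep B''" "zspan B'' = ?H'" "card B'' \<le> card F"
    using insert.IH[OF indF sgH'] by blast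
  define I where "I = {k::int. \<exists>h\<in>H. h - of_int k *\<^sub>R g \<in> zspan F}"
  have Hrep: "\<exists>k. h - of_int k *\<^sub>R g \<in> zspan F" if "h \<in> H" for h
  proof -
    have "h \<in> zspan (insert g F)" using that insert.prems(3) by blast
    then obtain k f where "h = of_int k *\<^sub>R g + f" "f \<in> zspan F" unfolding zspan_insert by blast
    thus ?thesis by (intro exI[of _ k]) simp
  qed
  have gcoef: "k = 0" if "of_int k *\<^sub>R g \<in> zspan F" for k
    using zindep_insert_coef[OF insert(1,2) insert.prems(1) that] .
  show ?case
  proof (cases "\<forall>k\<in>I. k = 0")
    case True
    have "H \<subseteq> zspan F"
    proof
      fix h assume h: "h \<in> H"
      then obtain k where k: "h - of_int k *\<^sub>R g \<in> zspan F" using Hrep by blast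
      hence "k = 0" using True h unfolding I_def by blast
      thus "h \<in> zspan F" using k by simp
    qed
    hence "?H' = H" by blast
    thus ?thesis using B'' insert(1,2) by (intro exI[of _ B'']) auto
  next
    case False
    then obtain k0 where k0: "k0 \<in> I" "k0 \<noteq> 0" by blast
    have Ineg: "- k \<in> I" if kI: "k \<in> I" for k
    proof -
      obtain h where h: "h \<in> H" "h - of_int k *\<^sub>R g \<in> zspan F" using kI unfolding I_def by blast
      have "- h \<in> H" using subgrp_neg[OF insert.prems(2) h(1)] .
      moreover have "- h - of_int (-k) *\<^sub>R g = - (h - of_int k *\<^sub>R g)" by (simp add: algebra_simps)
      ultimately show ?thesis unfolding I_def using zspan_neg[OF h(2)] by (metis (mono_tags) mem_Collect_eq)
    qed
    have "\<exists>k. k \<in> I \<and> k > 0"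
    proof (cases "k0 > 0")
      case True thus ?thesis using k0 by blast
    next
      case False thus ?thesis using k0 Ineg[OF k0(1)] by (intro exI[of _ "-k0"]) auto
    qed
    then obtain kp where kp: "kp \<in> I" "kp > 0" by blast
    have "int (nat kp) \<in> I \<and> nat kp > 0" using kp by simp
    hence exn: "\<exists>n. int n \<in> I \<and> n > 0" by blast
    define n0 where "n0 = (LEAST n. int n \<in> I \<and> n > 0)"
    have n0: "int n0 \<in> I \<and> n0 > 0" unfolding n0_def by (rule LeastI_ex) fact
    define d where "d = int n0"
    have dI: "d \<in> I \<and> d > 0" using n0 by (simp add: d_def)
    have dmin: "\<not> (k \<in> I \<and> 0 < k \<and> k < d)" for k
    proof
      assume k: "k \<in> I \<and> 0 < k \<and> k < d"
      hence "int (nat k) \<in> I \<and> nat k > 0" by simp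
      hence "n0 \<le> nat k" unfolding n0_def by (rule Least_le)
      thus False using k unfolding d_def by linarith
    qed
    obtain h0 where h0: "h0 \<in> H" "h0 - of_int d *\<^sub>R g \<in> zspan F" using dI unfolding I_def by blast
    have h0nF: "h0 \<notin> zspan F"
    proof
      assume "h0 \<in> zspan F"
      hence "h0 - (h0 - of_int d *\<^sub>R g) \<in> zspan F" using h0(2) by (rule zspan_diff)
      hence "d = 0" using gcoef by simp
      thus False using dI by simp
    qed
    have h0nB: "h0 \<notin> B''" using h0nF B''(3) zspan_sup[of h0 B''] by blast
    let ?B' = "insert h0 B''"
    have span_eq: "zspan ?B' = H"
    proof
      have "?B' \<subseteq> H" using h0(1) B''(3) zspan_sup[of _ B''] by blast
      thus "zspan ?B' \<subseteq> H" using zspan_least[OF insert.prems(2)] by blast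
      show "H \<subseteq> zspan ?B'"
      proof
        fix h assume h: "h \<in> H"
        then obtain k where k: "h - of_int k *\<^sub>R g \<in> zspan F" using Hrep by blast
        define q where "q = k div d"
        define r where "r = k mod d"
        have kqr: "k = q * d + r" unfolding q_def r_def by simp
        have r: "0 \<le> r" "r < d" unfolding r_def using dI by auto
        have hq: "h - of_int q *\<^sub>R h0 \<in> H"
          using subgrp_diff[OF insert.prems(2) h subgrp_smult[OF insert.prems(2) h0(1)]] .
        have "(h - of_int q *\<^sub>R h0) - of_int r *\<^sub>R g
              = (h - of_int k *\<^sub>R g) - of_int q *\<^sub>R (h0 - of_int d *\<^sub>R g)"
          by (simp add: kqr algebra_simps)
        also have "\<dots> \<in> zspan F" using k zspan_smult[OF h0(2)] by (rule zspan_diff)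
        finally have rin: "(h - of_int q *\<^sub>R h0) - of_int r *\<^sub>R g \<in> zspan F" .
        hence "r \<in> I" unfolding I_def using hq by blast
        hence "r = 0" using dmin[of r] r by auto
        hence "h - of_int q *\<^sub>R h0 \<in> zspan B''" using rin hq B''(3) by simp
        hence "h - of_int q *\<^sub>R h0 \<in> zspan ?B'" using zspan_mono[of B'' ?B'] by blast
        moreover have "of_int q *\<^sub>R h0 \<in> zspan ?B'" by (rule zspan_smult, rule zspan_sup) simp
        ultimately have "(h - of_int q *\<^sub>R h0) + of_int q *\<^sub>R h0 \<in> zspan ?B'" by (rule zspan_add)
        thus "h \<in> zspan ?B'" by simp
      qed
    qed
    have indB': "zindep ?B'" unfolding zindep_def
    proof (intro allI impI)
      fix c :: "'a \<Rightarrow> int" assume s: "(\<Sum>x\<in>?B'. of_int (c x) *\<^sub>R x) = 0"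
      hence s2: "of_int (c h0) *\<^sub>R h0 + (\<Sum>x\<in>B''. of_int (c x) *\<^sub>R x) = 0"
        using B''(1) h0nB by simp
      have "(\<Sum>x\<in>B''. of_int (c x) *\<^sub>R x) \<in> zspan B''" using zspan_rep[OF B''(1)] by blast
      hence inF: "(\<Sum>x\<in>B''. of_int (c x) *\<^sub>R x) \<in> zspan F" using B''(3) by blast
      have "of_int (c h0) *\<^sub>R h0 = - (\<Sum>x\<in>B''. of_int (c x) *\<^sub>R x)"
        using s2 by (simp add: eq_neg_iff_add_eq_0)
      hence a: "of_int (c h0) *\<^sub>R h0 \<in> zspan F" using zspan_neg[OF inF] by simp
      have "of_int (c h0) *\<^sub>R h0 - of_int (c h0) *\<^sub>R (h0 - of_int d *\<^sub>R g) \<in> zspan F"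
        using a zspan_smult[OF h0(2)] by (rule zspan_diff)
      hence "of_int (c h0 * d) *\<^sub>R g \<in> zspan F" by (simp add: algebra_simps)
      hence "c h0 * d = 0" by (rule gcoef)
      hence ch0: "c h0 = 0" using dI by simp
      hence "(\<Sum>x\<in>B''. of_int (c x) *\<^sub>R x) = 0" using s2 by simp
      hence "\<forall>x\<in>B''. c x = 0" using B''(2) unfolding zindep_def by blast
      thus "\<forall>x\<in>?B'. c x = 0" using ch0 by simp
    qed
    have "card ?B' \<le> card (insert g F)"
      using B''(1,4) insert(1,2) h0nB by simp
    thus ?thesis using span_eq indB' B''(1) by (intro exI[of _ ?B']) auto
  qed
qed

lemma fg_subgroup:
  assumes "finite G" "subgrp H" "H \<subseteq> zspan G"
  shows "\<exists>B'. finite B' \<and> zindep B' \<and> zspan B' = H \<and> card B' \<le> card G"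
proof -
  obtain B where B: "finite B" "zindep B" "zspan G \<subseteq> zspan B" "card B \<le> card G"
    using embed_indep[OF assms(1)] by blast
  obtain B' where "finite B'" "zindep B'" "zspan B' = H" "card B' \<le> card B"
    using subgroup_of_indep[OF B(1,2) assms(2)] assms(3) B(3) by blast
  thus ?thesis using B(4) by (intro exI[of _ B']) auto
qed

definition cs :: "'a::real_vector set \<Rightarrow> 'a \<Rightarrow> 'a set" where
  "cs G x = {x + 2 *\<^sub>R w | w. w \<in> G}"

lemma cs_self: "0 \<in> G \<Longrightarrow> x \<in> cs G x"
  unfolding cs_def by (rule CollectI, rule exI[of _ 0]) simp

lemma cs_eq:
  assumes "subgrp G"
  shows "cs G x = cs G y \<longleftrightarrow> (\<exists>w\<in>G. x - y = 2 *\<^sub>R w)"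
proof
  assume "cs G x = cs G y"
  hence "x \<in> cs G y" using cs_self[OF subgrp_0[OF assms]] by blast
  then obtain w where "w \<in> G" "x = y + 2 *\<^sub>R w" unfolding cs_def by blast
  thus "\<exists>w\<in>G. x - y = 2 *\<^sub>R w" by (intro bexI[of _ w]) auto
next
  assume "\<exists>w\<in>G. x - y = 2 *\<^sub>R w"
  then obtain w where w: "w \<in> G" "x - y = 2 *\<^sub>R w" by blast
  have 1: "cs G x \<subseteq> cs G y" if "w \<in> G" "x - y = 2 *\<^sub>R w" for x y w
  proof
    fix z assume "z \<in> cs G x"
    then obtain v where v: "v \<in> G" "z = x + 2 *\<^sub>R v" unfolding cs_def by blast
    have "z = y + 2 *\<^sub>R (w + v)" using v that by (simp add: algebra_simps)
    moreover have "w + v \<in> G" using subgrp_add[OF assms] that v by blast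
    ultimately show "z \<in> cs G y" unfolding cs_def by blast
  qed
  have "y - x = 2 *\<^sub>R (- w)" using w by (simp add: algebra_simps)
  moreover have "- w \<in> G" using subgrp_neg[OF assms w(1)] .
  ultimately show "cs G x = cs G y" using 1[OF w] 1[of "-w" y x] by blast
qed

lemma sum_int_diff:
  "(\<Sum>b\<in>B. of_int (f b - g b) *\<^sub>R (b::'a::real_vector)) =
   (\<Sum>b\<in>B. of_int (f b) *\<^sub>R b) - (\<Sum>b\<in>B. of_int (g b) *\<^sub>R b)"
  by (simp add: sum_subtractf scaleR_diff_left)

lemma sum_int_2:
  "(\<Sum>b\<in>B. of_int (2 * f b) *\<^sub>R (b::'a::real_vector)) = 2 *\<^sub>R (\<Sum>b\<in>B. of_int (f b) *\<^sub>R b)"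
  by (simp add: scaleR_sum_right)

lemma sum_indicator_rep:
  assumes "finite B" "Q \<subseteq> B"
  shows "\<Sum>Q = (\<Sum>b\<in>B. of_int (if b \<in> Q then 1 else 0) *\<^sub>R (b::'a::real_vector))"
proof -
  have "(\<Sum>b\<in>B. of_int (if b \<in> Q then 1 else 0) *\<^sub>R b) = (\<Sum>b\<in>B. if b \<in> Q then b else 0)"
    by (rule sum.cong) auto
  also have "\<dots> = (\<Sum>b\<in>B \<inter> Q. b)" using assms(1) by (simp add: sum.inter_restrict)
  also have "B \<inter> Q = Q" using assms(2) by blast
  finally show ?thesis by simp
qed

lemma card_cosets_basis:
  assumes fin: "finite B" and ind: "zindep B"
  shows "card {cs (zspan B) l | l. l \<in> zspan B} = 2 ^ card B"
proof -
  let ?G = "zspan B"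
  let ?C = "{cs ?G l | l. l \<in> ?G}"
  define \<phi> where "\<phi> Q = cs ?G (\<Sum>Q)" for Q
  let ?i = "\<lambda>Q b. (if b \<in> Q then 1 else 0) :: int"
  have sgG: "subgrp ?G" by (rule subgrp_zspan)
  have inj: "inj_on \<phi> (Pow B)"
  proof (rule inj_onI)
    fix Q Q' assume Q: "Q \<in> Pow B" and Q': "Q' \<in> Pow B" and e: "\<phi> Q = \<phi> Q'"
    then obtain w where w: "w \<in> ?G" "\<Sum>Q - \<Sum>Q' = 2 *\<^sub>R w" unfolding \<phi>_def cs_eq[OF sgG] by blast
    obtain d where d: "w = (\<Sum>b\<in>B. of_int (d b) *\<^sub>R b)" using w(1) zspan_rep[OF fin] by blast
    have "(\<Sum>b\<in>B. of_int (?i Q b - ?i Q' b - 2 * d b) *\<^sub>R b) = \<Sum>Q - \<Sum>Q' - 2 *\<^sub>R w"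
      unfolding sum_int_diff sum_int_2 d
      using sum_indicator_rep[OF fin, of Q] sum_indicator_rep[OF fin, of Q'] Q Q' by simp
    also have "\<dots> = 0" using w(2) by simp
    finally have s0: "(\<Sum>b\<in>B. of_int (?i Q b - ?i Q' b - 2 * d b) *\<^sub>R b) = 0" .
    have z: "\<And>c. (\<Sum>x\<in>B. of_int (c x) *\<^sub>R x) = 0 \<Longrightarrow> \<forall>x\<in>B. c x = 0"
      using ind unfolding zindep_def by blast
    have "\<forall>b\<in>B. ?i Q b - ?i Q' b - 2 * d b = 0" by (rule z[OF s0])
    have "?i Q b = ?i Q' b" if b: "b \<in> B" for b
    proof -
      have "?i Q b - ?i Q' b - 2 * d b = 0" using \<open>\<forall>b\<in>B. _\<close> b by blast
      thus ?thesis by (auto split: if_splits) presburger+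
    qed
    hence "\<forall>b\<in>B. ?i Q b = ?i Q' b" by blast
    thus "Q = Q'" using Q Q' by (auto split: if_splits)
  qed
  have img: "\<phi> ` Pow B = ?C"
  proof
    show "\<phi> ` Pow B \<subseteq> ?C"
    proof
      fix x assume "x \<in> \<phi> ` Pow B"
      then obtain Q where Q: "Q \<subseteq> B" "x = \<phi> Q" by blast
      have "\<Sum>Q \<in> ?G" using Q(1) by (intro subgrp_sum[OF sgG]) (auto intro: finite_subset[OF _ fin] zspan_sup)
      thus "x \<in> ?C" using Q(2) unfolding \<phi>_def by blast
    qed
    show "?C \<subseteq> \<phi> ` Pow B"
    proof
      fix x assume "x \<in> ?C"
      then obtain l where l: "l \<in> ?G" "x = cs ?G l" by blast
      obtain c where c: "l = (\<Sum>b\<in>B. of_int (c b) *\<^sub>R b)" using l(1) zspan_rep[OF fin] by blast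
      define Q where "Q = {b \<in> B. odd (c b)}"
      define e where "e b = (c b - ?i Q b) div 2" for b
      have ce: "c b - ?i Q b = 2 * e b" if "b \<in> B" for b unfolding e_def Q_def using that by auto
      have "l - \<Sum>Q = (\<Sum>b\<in>B. of_int (c b - ?i Q b) *\<^sub>R b)"
        unfolding sum_int_diff c using sum_indicator_rep[OF fin, of Q] by (simp add: Q_def)
      also have "\<dots> = (\<Sum>b\<in>B. of_int (2 * e b) *\<^sub>R b)" by (rule sum.cong) (simp_all add: ce)
      also have "\<dots> = 2 *\<^sub>R (\<Sum>b\<in>B. of_int (e b) *\<^sub>R b)" unfolding sum_int_2 ..
      finally have "cs ?G l = \<phi> Q" unfolding \<phi>_def cs_eq[OF sgG] using zspan_rep[OF fin] by blast
      thus "x \<in> \<phi> ` Pow B" using l(2) by (auto simp: Q_def)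
    qed
  qed
  have "card ?C = card (Pow B)" using card_image[OF inj] img by simp
  thus ?thesis using fin by (simp add: card_Pow)
qed

lemma zrank_basis:
  assumes fin: "finite B" and ind: "zindep B"
  shows "zrank (zspan B) = card B"
proof -
  let ?A = "{card X | X. finite X \<and> X \<subseteq> zspan B \<and> zindep X}"
  have mem: "card B \<in> ?A" using fin ind by (auto intro: zspan_sup)
  have le: "\<forall>x\<in>?A. x \<le> card B"
  proof
    fix x assume "x \<in> ?A"
    then obtain X where X: "x = card X" "finite X" "X \<subseteq> zspan B" "zindep X" by blast
    have "zspan X \<subseteq> zspan B" using zspan_least[OF subgrp_zspan X(3)] .
    then obtain B' where B': "finite B'" "zindep B'" "zspan B' = zspan X" "card B' \<le> card B"
      using fg_subgroup[OF fin subgrp_zspan] by blast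
    have "(2::nat) ^ card X = 2 ^ card B'"
      using card_cosets_basis[OF X(2,4)] card_cosets_basis[OF B'(1,2)] B'(3) by simp
    hence "card X = card B'" by simp
    thus "x \<le> card B" using X(1) B'(4) by simp
  qed
  show ?thesis unfolding zrank_def by (rule cSup_eq_maximum[OF mem]) (use le in blast)
qed

definition cong2 :: "'a::real_vector set \<Rightarrow> 'a \<Rightarrow> 'a \<Rightarrow> bool" where
  "cong2 G a b \<longleftrightarrow> (\<exists>w\<in>G. a - b = 2 *\<^sub>R w)"

lemma cong2_refl: "subgrp G \<Longrightarrow> cong2 G a a"
  unfolding cong2_def by (intro bexI[of _ 0]) (auto simp: subgrp_0)

lemma cong2_sym: "subgrp G \<Longrightarrow> cong2 G a b \<Longrightarrow> cong2 G b a"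
  unfolding cong2_def by (metis minus_diff_eq scaleR_minus_right subgrp_neg)

lemma cong2_trans: "subgrp G \<Longrightarrow> cong2 G a b \<Longrightarrow> cong2 G b c \<Longrightarrow> cong2 G a c"
  unfolding cong2_def
proof -
  assume G: "subgrp G" and "\<exists>w\<in>G. a - b = 2 *\<^sub>R w" "\<exists>w\<in>G. b - c = 2 *\<^sub>R w"
  then obtain w v where "w \<in> G" "a - b = 2 *\<^sub>R w" "v \<in> G" "b - c = 2 *\<^sub>R v" by blast
  thus "\<exists>w\<in>G. a - c = 2 *\<^sub>R w"
    by (intro bexI[of _ "w + v"]) (auto simp: algebra_simps intro: subgrp_add[OF G])
qed

lemma cong2_add: "subgrp G \<Longrightarrow> cong2 G a b \<Longrightarrow> cong2 G c d \<Longrightarrow> cong2 G (a + c) (b + d)"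
  unfolding cong2_def
proof -
  assume G: "subgrp G" and "\<exists>w\<in>G. a - b = 2 *\<^sub>R w" "\<exists>w\<in>G. c - d = 2 *\<^sub>R w"
  then obtain w v where "w \<in> G" "a - b = 2 *\<^sub>R w" "v \<in> G" "c - d = 2 *\<^sub>R v" by blast
  thus "\<exists>w\<in>G. a + c - (b + d) = 2 *\<^sub>R w"
    by (intro bexI[of _ "w + v"]) (auto simp: algebra_simps intro: subgrp_add[OF G])
qed

lemma cong2_smult: "subgrp G \<Longrightarrow> cong2 G a b \<Longrightarrow> cong2 G (of_int k *\<^sub>R a) (of_int k *\<^sub>R b)"
  unfolding cong2_def
proof -
  assume G: "subgrp G" and "\<exists>w\<in>G. a - b = 2 *\<^sub>R w"
  then obtain w where "w \<in> G" "a - b = 2 *\<^sub>R w" by blast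
  thus "\<exists>w\<in>G. of_int k *\<^sub>R a - of_int k *\<^sub>R b = 2 *\<^sub>R w"
    by (intro bexI[of _ "of_int k *\<^sub>R w"]) (auto simp: algebra_simps scaleR_diff_right[symmetric] intro: subgrp_smult[OF G])
qed

lemma cong2_sum:
  assumes G: "subgrp G" and "finite F" "\<And>x. x \<in> F \<Longrightarrow> cong2 G (f x) (g x)"
  shows "cong2 G (sum f F) (sum g F)"
  using assms(2,3)
  by (induction F rule: finite_induct) (auto intro: cong2_refl[OF G] cong2_add[OF G])

lemma cong2_even: "subgrp G \<Longrightarrow> g \<in> G \<Longrightarrow> even k \<Longrightarrow> cong2 G (of_int k *\<^sub>R g) 0"
  unfolding cong2_def
  by (intro bexI[of _ "of_int (k div 2) *\<^sub>R g"]) (auto elim!: evenE intro: subgrp_smult)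

lemma cong2_cs: "subgrp G \<Longrightarrow> cs G a = cs G b \<longleftrightarrow> cong2 G a b"
  unfolding cong2_def using cs_eq by blast

lemma subset_sum_rep:
  assumes G: "subgrp G" and fin: "finite M" and MG: "M \<subseteq> G" and z: "z \<in> zspan M"
  shows "\<exists>Q\<subseteq>M. cong2 G z (\<Sum>Q)"
  using fin MG z
proof (induction M arbitrary: z rule: finite_induct)
  case empty thus ?case using cong2_refl[OF G] by auto
next
  case (insert g M)
  obtain k f where kf: "z = of_int k *\<^sub>R g + f" "f \<in> zspan M"
    using insert.prems(2) unfolding zspan_insert by blast
  obtain Q where Q: "Q \<subseteq> M" "cong2 G f (\<Sum>Q)" using insert.IH[OF _ kf(2)] insert.prems(1) by blast
  have gG: "g \<in> G" using insert.prems(1) by blast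
  show ?case
  proof (cases "even k")
    case True
    have "cong2 G (of_int k *\<^sub>R g + f) (0 + \<Sum>Q)"
      by (rule cong2_add[OF G cong2_even[OF G gG True] Q(2)])
    thus ?thesis using Q(1) kf(1) by (intro exI[of _ Q]) auto
  next
    case False
    have "cong2 G (of_int (k - 1) *\<^sub>R g) 0" by (rule cong2_even[OF G gG]) (use False in simp)
    hence "cong2 G (of_int (k - 1) *\<^sub>R g + g) (0 + g)" by (rule cong2_add[OF G _ cong2_refl[OF G]])
    hence "cong2 G (of_int k *\<^sub>R g) g" by (simp add: algebra_simps)
    hence "cong2 G (of_int k *\<^sub>R g + f) (g + \<Sum>Q)" by (rule cong2_add[OF G _ Q(2)])
    moreover have "\<Sum>(insert g Q) = g + \<Sum>Q"
      using Q(1) insert(1,2) by (subst sum.insert) (auto intro: finite_subset)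
    ultimately show ?thesis using Q(1) kf(1) by (intro exI[of _ "insert g Q"]) auto
  qed
qed

lemma msum_mem: "x \<in> msum A B \<longleftrightarrow> (\<exists>a\<in>A. \<exists>b\<in>B. x = a + b)"
  unfolding msum_def by blast

lemma ab_aux: "(x::'a::ab_group_add) = A + Bs \<Longrightarrow> x = (a1 + b1) + (a2 + b2) \<Longrightarrow> a1 + a2 - A = Bs - b1 - b2"
  by (simp add: algebra_simps)

lemma ab_aux2: "((a1::'a::ab_group_add) + b1) + (a2 + b2) = (a1 + a2) + (b1 + b2)"
  by (simp add: algebra_simps)

lemma ab_aux3: "((a1::'a::ab_group_add) + b1) + (a2 + b2) - y = (a2 + (a1 - ay)) + (b1 + b2 - (y - ay))"
  by (simp add: algebra_simps)

lemma parity_closed: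
  fixes S S1 \<Lambda>1 \<Lambda>2 W :: "'a::real_vector set"
  assumes L1: "subgrp \<Lambda>1" and L2: "subgrp \<Lambda>2" and disj: "\<Lambda>1 \<inter> \<Lambda>2 = {0}"
    and semS1: "semilattice S1" and spS1: "zspan S1 = \<Lambda>1" and ind: "sl_ind S1 = zrank \<Lambda>1"
    and Sdef: "S = msum S1 \<Lambda>2" and W: "subgrp W"
    and xS: "x \<in> msum S S" and xW: "x \<in> zspan (S \<inter> W)"
  shows "x \<in> msum (S \<inter> W) (S \<inter> W)"
proof -
  obtain F0 where F0: "finite F0" "zspan F0 = \<Lambda>1"
    using semS1 spS1 unfolding semilattice_def fg_lattice_def by blast
  obtain B where B: "finite B" "zindep B" "zspan B = \<Lambda>1"
    using fg_subgroup[OF F0(1) L1] F0(2) by blast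
  have rk: "zrank \<Lambda>1 = card B" using zrank_basis[OF B(1,2)] B(3) by simp
  define C1 where "C1 = {cs \<Lambda>1 l | l. l \<in> \<Lambda>1}"
  have cardC1: "card C1 = 2 ^ card B" using card_cosets_basis[OF B(1,2)] B(3) by (simp add: C1_def)
  hence finC1: "finite C1" by (intro card_ge_0_finite) simp
  have S1L1: "S1 \<subseteq> \<Lambda>1" using spS1 zspan_sup by blast
  have S10: "0 \<in> S1" using semS1 unfolding semilattice_def by blast
  have S1add: "s + 2 *\<^sub>R w \<in> S1" if "s \<in> S1" "w \<in> \<Lambda>1" for s w
    using semS1 that spS1 unfolding semilattice_def by blast
  define Cs where "Cs = {cs \<Lambda>1 s | s. s \<in> S1}"
  have CsC1: "Cs \<subseteq> C1" using S1L1 unfolding Cs_def C1_def by blast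
  have finCs: "finite Cs" using finite_subset[OF CsC1 finC1] .
  define c0 where "c0 = cs \<Lambda>1 0"
  have c0Cs: "c0 \<in> Cs" using S10 unfolding c0_def Cs_def by blast
  have "sl_ind S1 = card Cs - 1" unfolding sl_ind_def Cs_def cs_def spS1 ..
  hence cardCs: "card (Cs - {c0}) = card B" using ind rk c0Cs finCs by (simp add: card_Diff_singleton)
  define rep where "rep c = (SOME s. s \<in> S1 \<and> cs \<Lambda>1 s = c)" for c
  have rep: "rep c \<in> S1 \<and> cs \<Lambda>1 (rep c) = c" if "c \<in> Cs" for c
    unfolding rep_def by (rule someI_ex) (use that in \<open>auto simp: Cs_def\<close>)
  define Tau where "Tau = rep ` (Cs - {c0})"
  have injrep: "inj_on rep (Cs - {c0})" by (rule inj_onI) (metis DiffD1 rep)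
  have cardTau: "card Tau = card B" unfolding Tau_def using card_image[OF injrep] cardCs by simp
  have finTau: "finite Tau" unfolding Tau_def using finCs by simp
  have TauS1: "Tau \<subseteq> S1" unfolding Tau_def using rep by blast
  have TauL1: "Tau \<subseteq> \<Lambda>1" using TauS1 S1L1 by blast
  have Tau_distinct: "t = t'" if tt: "t \<in> Tau" "t' \<in> Tau" "cong2 \<Lambda>1 t t'" for t t'
  proof -
    obtain c c' where c: "c \<in> Cs - {c0}" "t = rep c" "c' \<in> Cs - {c0}" "t' = rep c'"
      using tt(1,2) unfolding Tau_def by blast
    have "cs \<Lambda>1 t = cs \<Lambda>1 t'" using tt(3) cong2_cs[OF L1] by blast
    hence "c = c'" using rep c by (metis DiffD1)
    thus ?thesis using c by simp
  qed
  define r where "r a = (if cs \<Lambda>1 a = c0 then 0 else rep (cs \<Lambda>1 a))" for a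
  have r: "r a \<in> insert 0 Tau \<and> cong2 \<Lambda>1 a (r a)" if "a \<in> S1" for a
  proof (cases "cs \<Lambda>1 a = c0")
    case True
    thus ?thesis unfolding r_def c0_def using cong2_cs[OF L1] by auto
  next
    case False
    have "cs \<Lambda>1 a \<in> Cs - {c0}" using that False unfolding Cs_def by blast
    hence "rep (cs \<Lambda>1 a) \<in> Tau" "cs \<Lambda>1 (rep (cs \<Lambda>1 a)) = cs \<Lambda>1 a"
      unfolding Tau_def using rep by auto
    hence "cong2 \<Lambda>1 a (rep (cs \<Lambda>1 a))" using cong2_cs[OF L1] by metis
    thus ?thesis unfolding r_def using False \<open>rep (cs \<Lambda>1 a) \<in> Tau\<close> by simp
  qed
  have r0: "cong2 \<Lambda>1 a 0" if "a \<in> S1" "r a = 0" for a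
    using r[OF that(1)] that(2) by simp
  have rep_sum: "\<exists>Q\<subseteq>Tau. cong2 \<Lambda>1 (\<Sum>y\<in>F. of_int (c y) *\<^sub>R g y) (\<Sum>Q) \<and> (\<forall>t\<in>Q. \<exists>y\<in>F. r (g y) = t)"
    if F: "finite F" "\<And>y. y \<in> F \<Longrightarrow> g y \<in> S1" for F :: "'a set" and c :: "'a \<Rightarrow> int" and g :: "'a \<Rightarrow> 'a"
  proof -
    let ?z = "\<Sum>y\<in>F. of_int (c y) *\<^sub>R r (g y)"
    have c1: "cong2 \<Lambda>1 (\<Sum>y\<in>F. of_int (c y) *\<^sub>R g y) ?z"
      by (rule cong2_sum[OF L1 F(1)]) (use r F(2) cong2_smult[OF L1] in blast)
    define M where "M = (\<lambda>y. r (g y)) ` F - {0}"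
    have MT: "M \<subseteq> Tau" unfolding M_def using r F(2) by blast
    have finM: "finite M" unfolding M_def using F(1) by simp
    have "?z \<in> zspan ((\<lambda>y. r (g y)) ` F)" by (rule zspan_sum_image[OF F(1)])
    also have "zspan ((\<lambda>y. r (g y)) ` F) \<subseteq> zspan M"
    proof (rule zspan_least[OF subgrp_zspan], rule subsetI)
      fix v assume "v \<in> (\<lambda>y. r (g y)) ` F"
      thus "v \<in> zspan M" by (cases "v = 0") (auto simp: M_def intro: zspan_sup)
    qed
    finally have "?z \<in> zspan M" .
    then obtain Q where Q: "Q \<subseteq> M" "cong2 \<Lambda>1 ?z (\<Sum>Q)"
      using subset_sum_rep[OF L1 finM] MT TauL1 by blast
    have "cong2 \<Lambda>1 (\<Sum>y\<in>F. of_int (c y) *\<^sub>R g y) (\<Sum>Q)" using cong2_trans[OF L1 c1 Q(2)] .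
    moreover have "\<forall>t\<in>Q. \<exists>y\<in>F. r (g y) = t" using Q(1) unfolding M_def by blast
    ultimately show ?thesis using Q(1) MT by blast
  qed
  define \<psi> where "\<psi> Q = cs \<Lambda>1 (\<Sum>Q)" for Q
  have img: "\<psi> ` Pow Tau = C1"
  proof
    show "\<psi> ` Pow Tau \<subseteq> C1"
    proof
      fix z assume "z \<in> \<psi> ` Pow Tau"
      then obtain Q where Q: "Q \<subseteq> Tau" "z = \<psi> Q" by blast
      have "\<Sum>Q \<in> \<Lambda>1" using Q(1) TauL1 finite_subset[OF Q(1) finTau]
        by (intro subgrp_sum[OF L1]) auto
      thus "z \<in> C1" using Q(2) unfolding \<psi>_def C1_def by blast
    qed
    show "C1 \<subseteq> \<psi> ` Pow Tau"
    proof
      fix z assume "z \<in> C1"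
      then obtain l where l: "l \<in> \<Lambda>1" "z = cs \<Lambda>1 l" unfolding C1_def by blast
      obtain F c where F: "finite F" "F \<subseteq> S1" "l = (\<Sum>y\<in>F. of_int (c y) *\<^sub>R y)"
        using l(1) spS1[symmetric] unfolding zspan_def by blast
      obtain Q where Q: "Q \<subseteq> Tau" "cong2 \<Lambda>1 (\<Sum>y\<in>F. of_int (c y) *\<^sub>R id y) (\<Sum>Q)"
        using rep_sum[of F id c] F(1,2) by auto
      have "z = \<psi> Q" unfolding \<psi>_def l(2) using Q(2) F(3) cong2_cs[OF L1] by simp
      thus "z \<in> \<psi> ` Pow Tau" using Q(1) by blast
    qed
  qed
  have injpsi: "inj_on \<psi> (Pow Tau)"
  proof (rule eq_card_imp_inj_on)
    show "finite (Pow Tau)" using finTau by simp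
    have "card (\<psi> ` Pow Tau) = 2 ^ card Tau" unfolding img cardC1 cardTau ..
    also have "\<dots> = card (Pow Tau)" using finTau by (simp add: card_Pow)
    finally show "card (\<psi> ` Pow Tau) = card (Pow Tau)" .
  qed
  have INJ: "Q = Q'" if "Q \<subseteq> Tau" "Q' \<subseteq> Tau" "cong2 \<Lambda>1 (\<Sum>Q) (\<Sum>Q')" for Q Q'
  proof -
    have "\<psi> Q = \<psi> Q'" unfolding \<psi>_def using that(3) cong2_cs[OF L1] by blast
    thus ?thesis using inj_onD[OF injpsi] that(1,2) by blast
  qed
  obtain s1 s2 where s12: "s1 \<in> S" "s2 \<in> S" "x = s1 + s2" using xS unfolding msum_def by blast
  obtain a1 b1 where ab1: "a1 \<in> S1" "b1 \<in> \<Lambda>2" "s1 = a1 + b1" using s12(1) Sdef unfolding msum_def by blast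
  obtain a2 b2 where ab2: "a2 \<in> S1" "b2 \<in> \<Lambda>2" "s2 = a2 + b2" using s12(2) Sdef unfolding msum_def by blast
  obtain F c where F: "finite F" "F \<subseteq> S \<inter> W" "x = (\<Sum>y\<in>F. of_int (c y) *\<^sub>R y)"
    using xW unfolding zspan_def by blast
  define a where "a y = (SOME a. a \<in> S1 \<and> y - a \<in> \<Lambda>2)" for y
  have a: "a y \<in> S1 \<and> y - a y \<in> \<Lambda>2" if "y \<in> S" for y
    unfolding a_def by (rule someI_ex) (use that Sdef in \<open>auto simp: msum_def\<close>)
  have xWW: "x \<in> W" using xW zspan_least[OF W, of "S \<inter> W"] by blast
  have S0: "0 \<in> S" using S10 subgrp_0[OF L2] Sdef unfolding msum_def by force
  have sumsplit: "x = (\<Sum>y\<in>F. of_int (c y) *\<^sub>R a y) + (\<Sum>y\<in>F. of_int (c y) *\<^sub>R (y - a y))"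
    unfolding F(3) by (simp add: sum.distrib[symmetric] scaleR_diff_right)
  have in1: "a1 + a2 - (\<Sum>y\<in>F. of_int (c y) *\<^sub>R a y) \<in> \<Lambda>1"
    using ab1 ab2 S1L1 a F(2) by (intro subgrp_diff[OF L1] subgrp_add[OF L1] subgrp_sum[OF L1 F(1)] subgrp_smult[OF L1]) auto
  have in2: "(\<Sum>y\<in>F. of_int (c y) *\<^sub>R (y - a y)) - b1 - b2 \<in> \<Lambda>2"
  proof -
    have "(\<Sum>y\<in>F. of_int (c y) *\<^sub>R (y - a y)) \<in> \<Lambda>2"
      by (rule subgrp_sum[OF L2 F(1)]) (use a F(2) subgrp_smult[OF L2] in blast)
    thus ?thesis using ab1(2) ab2(2) subgrp_diff[OF L2] by blast
  qed
  have "a1 + a2 - (\<Sum>y\<in>F. of_int (c y) *\<^sub>R a y) = (\<Sum>y\<in>F. of_int (c y) *\<^sub>R (y - a y)) - b1 - b2"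
    by (rule ab_aux[OF sumsplit]) (simp only: s12(3) ab1(3) ab2(3))
  hence "a1 + a2 - (\<Sum>y\<in>F. of_int (c y) *\<^sub>R a y) \<in> \<Lambda>1 \<inter> \<Lambda>2" using in1 in2 by simp
  hence "a1 + a2 - (\<Sum>y\<in>F. of_int (c y) *\<^sub>R a y) = 0" using disj by blast
  hence a12: "a1 + a2 = (\<Sum>y\<in>F. of_int (c y) *\<^sub>R a y)" by simp
  obtain Q where Q: "Q \<subseteq> Tau" "cong2 \<Lambda>1 (a1 + a2) (\<Sum>Q)" "\<forall>t\<in>Q. \<exists>y\<in>F. r (a y) = t"
    using rep_sum[of F a c] F(1,2) a unfolding a12 by blast
  have claim: "cong2 \<Lambda>1 a1 0 \<or> cong2 \<Lambda>1 a1 a2 \<or> (\<exists>y\<in>F. cong2 \<Lambda>1 a1 (a y))"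
  proof (rule ccontr)
    assume na: "\<not> ?thesis"
    have t1: "r a1 \<in> Tau" "cong2 \<Lambda>1 a1 (r a1)" using r[OF ab1(1)] r0[OF ab1(1)] na by auto
    have t1Q: "r a1 \<in> Q"
    proof (cases "r a2 = 0")
      case True
      have "cong2 \<Lambda>1 (a1 + a2) (r a1 + 0)" by (rule cong2_add[OF L1 t1(2) r0[OF ab2(1) True]])
      hence "cong2 \<Lambda>1 (r a1 + 0) (\<Sum>Q)" using cong2_trans[OF L1 cong2_sym[OF L1] Q(2)] by blast
      hence "cong2 \<Lambda>1 (\<Sum>{r a1}) (\<Sum>Q)" by simp
      hence "{r a1} = Q" by (rule INJ[rotated 2]) (use Q(1) t1(1) in auto)
      thus ?thesis by blast
    next
      case False
      have t2: "r a2 \<in> Tau" "cong2 \<Lambda>1 a2 (r a2)" using r[OF ab2(1)] False by auto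
      have ne: "r a1 \<noteq> r a2"
      proof
        assume "r a1 = r a2"
        hence "cong2 \<Lambda>1 (r a1) a2" using cong2_sym[OF L1 t2(2)] by simp
        hence "cong2 \<Lambda>1 a1 a2" using cong2_trans[OF L1 t1(2)] by blast
        thus False using na by blast
      qed
      have "cong2 \<Lambda>1 (a1 + a2) (r a1 + r a2)" by (rule cong2_add[OF L1 t1(2) t2(2)])
      hence "cong2 \<Lambda>1 (r a1 + r a2) (\<Sum>Q)" using cong2_trans[OF L1 cong2_sym[OF L1] Q(2)] by blast
      moreover have "\<Sum>{r a1, r a2} = r a1 + r a2" using ne by simp
      ultimately have "cong2 \<Lambda>1 (\<Sum>{r a1, r a2}) (\<Sum>Q)" by simp
      hence "{r a1, r a2} = Q" by (rule INJ[rotated 2]) (use Q(1) t1(1) t2(1) in auto)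
      thus ?thesis by blast
    qed
    then obtain y where y: "y \<in> F" "r (a y) = r a1" using Q(3) by blast
    have ay: "a y \<in> S1" using a y(1) F(2) by blast
    have "cong2 \<Lambda>1 (r (a y)) (a y)" using cong2_sym[OF L1 conjunct2[OF r[OF ay]]] .
    hence "cong2 \<Lambda>1 (r a1) (a y)" using y(2) by simp
    hence "cong2 \<Lambda>1 a1 (a y)" using cong2_trans[OF L1 t1(2)] by blast
    thus False using na y(1) by blast
  qed
  have xS_if: "x \<in> S" if h0: "a1 + a2 \<in> S1"
  proof -
    have "b1 + b2 \<in> \<Lambda>2" using subgrp_add[OF L2 ab1(2) ab2(2)] .
    moreover have "x = (a1 + a2) + (b1 + b2)" unfolding s12(3) ab1(3) ab2(3) by (rule ab_aux2)
    ultimately show ?thesis using h0 unfolding Sdef msum_def by blast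
  qed
  have fin0: "x \<in> msum (S \<inter> W) (S \<inter> W)" if "x \<in> S"
  proof -
    have "0 \<in> W" using subgrp_0[OF W] .
    thus ?thesis using that xWW S0 unfolding msum_def by (intro CollectI exI[of _ x] exI[of _ 0]) auto
  qed
  from claim show ?thesis
  proof (elim disjE)
    assume h: "cong2 \<Lambda>1 a1 0"
    then obtain w where w: "w \<in> \<Lambda>1" "a1 = 2 *\<^sub>R w" unfolding cong2_def by auto
    have "a1 + a2 = a2 + 2 *\<^sub>R w" using w(2) by simp
    hence "a1 + a2 \<in> S1" using S1add[OF ab2(1) w(1)] by (simp add: add.commute)
    thus ?thesis using fin0 xS_if by blast
  next
    assume h: "cong2 \<Lambda>1 a1 a2"
    then obtain w where w: "w \<in> \<Lambda>1" "a1 - a2 = 2 *\<^sub>R w" unfolding cong2_def by auto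
    have wa: "a2 + w \<in> \<Lambda>1" using subgrp_add[OF L1 _ w(1)] S1L1 ab2(1) by blast
    have "a1 = a2 + 2 *\<^sub>R w" using w(2) by (simp add: algebra_simps)
    hence "a1 + a2 = 0 + 2 *\<^sub>R (a2 + w)" by (simp add: algebra_simps scaleR_2)
    hence "a1 + a2 \<in> S1" using S1add[OF S10 wa] by simp
    thus ?thesis using fin0 xS_if by blast
  next
    assume "\<exists>y\<in>F. cong2 \<Lambda>1 a1 (a y)"
    then obtain y where y: "y \<in> F" "cong2 \<Lambda>1 a1 (a y)" by blast
    obtain w where w: "w \<in> \<Lambda>1" "a1 - a y = 2 *\<^sub>R w" using y(2) unfolding cong2_def by blast
    have yS: "y \<in> S" "y \<in> W" using y(1) F(2) by auto
    have "a2 + 2 *\<^sub>R w \<in> S1" by (rule S1add[OF ab2(1) w(1)])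
    moreover have "b1 + b2 - (y - a y) \<in> \<Lambda>2"
      using ab1(2) ab2(2) a[OF yS(1)] subgrp_diff[OF L2] subgrp_add[OF L2] by blast
    moreover have "x - y = (a2 + 2 *\<^sub>R w) + (b1 + b2 - (y - a y))"
      unfolding s12(3) ab1(3) ab2(3) w(2)[symmetric] by (rule ab_aux3)
    ultimately have "x - y \<in> S" unfolding Sdef msum_def by blast
    moreover have "x - y \<in> W" using subgrp_diff[OF W xWW yS(2)] .
    ultimately show ?thesis using yS unfolding msum_def by (intro CollectI exI[of _ y] exI[of _ "x - y"]) auto
  qed
qed

lemma psd_cs_zero:
  assumes f: "psd_form B" and s: "B s s = 0"
  shows "B s x = 0"
proof (rule ccontr)
  assume ne: "B s x \<noteq> 0"
  have bl: "bilinear B" and sym: "\<And>x y. B x y = B y x" and pos: "\<And>x. 0 \<le> B x x"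
    using f unfolding psd_form_def by auto
  define t where "t = - (B x x + 1) / (2 * B s x)"
  have "B (x + t *\<^sub>R s) (x + t *\<^sub>R s) = B x x + t * B x s + t * B s x + t * t * B s s"
    by (simp add: bilinear_ladd[OF bl] bilinear_radd[OF bl] bilinear_lmul[OF bl] bilinear_rmul[OF bl] algebra_simps)
  also have "\<dots> = B x x + 2 * t * B s x" using s sym[of x s] by simp
  also have "\<dots> = -1" using ne by (simp add: t_def field_simps)
  finally show False using pos[of "x + t *\<^sub>R s"] by simp
qed

locale ctx =
  fixes B :: "'a::euclidean_space \<Rightarrow> 'a \<Rightarrow> real"
    and R Rd S L :: "'a set"
  assumes form: "psd_form B"
    and ears: "ears B R"
    and frs: "finite_root_system B Rd"
    and red: "reduced_rs Rd"
    and sub: "Rd \<subseteq> R"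
    and semS: "semilattice S" and SV0: "S \<subseteq> V0 B R"
    and semL: "semilattice L" and LV0: "L \<subseteq> V0 B R"
    and Rdesc: "R = RSL B Rd S L"
    and R0desc: "R0 B R = msum S S"
begin

abbreviation "V \<equiv> V0 B R"
abbreviation "Sh \<equiv> short_roots B Rd"
abbreviation "Lg \<equiv> long_roots B Rd"

lemma bl: "bilinear B" using form unfolding psd_form_def by auto
lemma Bsym: "B x y = B y x" using form unfolding psd_form_def by auto
lemma Bpos: "0 \<le> B x x" using form unfolding psd_form_def by auto

lemmas Bsimps = bilinear_ladd[OF bl] bilinear_radd[OF bl] bilinear_lmul[OF bl] bilinear_rmul[OF bl]
  bilinear_lsub[OF bl] bilinear_rsub[OF bl] bilinear_lneg[OF bl] bilinear_rneg[OF bl]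
  bilinear_lzero[OF bl] bilinear_rzero[OF bl]

lemma rad: assumes "v \<in> V" shows "B v x = 0"
proof -
  let ?P = "{v. \<forall>x. B v x = 0}"
  have sP: "subspace ?P" unfolding subspace_def by (auto simp: Bsimps)
  have "R0 B R \<subseteq> ?P"
  proof
    fix s assume "s \<in> R0 B R"
    hence "B s s = 0" unfolding R0_def Rx_def by auto
    thus "s \<in> ?P" using psd_cs_zero[OF form] by blast
  qed
  hence "V \<subseteq> ?P" unfolding V0_def by (rule span_minimal[OF _ sP])
  thus ?thesis using assms by blast
qed

lemma rad2: "v \<in> V \<Longrightarrow> B x v = 0"
  using rad Bsym by metis

lemma posdef: "x \<in> span Rd \<Longrightarrow> x \<noteq> 0 \<Longrightarrow> 0 < B x x"
  using frs unfolding finite_root_system_def by blast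

lemma finRd: "finite Rd" using frs unfolding finite_root_system_def by blast
lemma Rd0: "0 \<in> Rd" using frs unfolding finite_root_system_def by blast

lemma cartan: "a \<in> Rd - {0} \<Longrightarrow> b \<in> Rd \<Longrightarrow> 2 * B b a / B a a \<in> \<int> \<and> b - (2 * B b a / B a a) *\<^sub>R a \<in> Rd"
  using frs unfolding finite_root_system_def by blast

lemma span_V0_inter: "x \<in> span Rd \<Longrightarrow> x \<in> V \<Longrightarrow> x = 0"
  using posdef rad by fastforce

lemma Rd_pos: "a \<in> Rd - {0} \<Longrightarrow> 0 < B a a"
  using posdef span_base by blast

lemma uniq: "a \<in> Rd \<Longrightarrow> b \<in> Rd \<Longrightarrow> v \<in> V \<Longrightarrow> w \<in> V \<Longrightarrow> a + v = b + w \<Longrightarrow> a = b"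
proof -
  assume h: "a \<in> Rd" "b \<in> Rd" "v \<in> V" "w \<in> V" "a + v = b + w"
  have "a - b = w - v" using h(5) by (simp add: algebra_simps)
  moreover have "a - b \<in> span Rd" using h(1,2) by (simp add: span_diff span_base)
  moreover have "w - v \<in> V" using h(3,4) unfolding V0_def by (simp add: span_diff)
  ultimately have "a - b = 0" using span_V0_inter by metis
  thus "a = b" by simp
qed

lemma uniq_V: "a \<in> Rd \<Longrightarrow> b \<in> Rd \<Longrightarrow> a - b \<in> V \<Longrightarrow> a = b"
  using span_V0_inter[of "a - b"] by (simp add: span_diff span_base)

lemma B_shift: "v \<in> V \<Longrightarrow> w \<in> V \<Longrightarrow> B (a + v) (b + w) = B a b"
  by (simp add: Bsimps rad rad2)

lemma V_add: "v \<in> V \<Longrightarrow> w \<in> V \<Longrightarrow> v + w \<in> V"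
  unfolding V0_def by (rule span_add)
lemma V_neg: "v \<in> V \<Longrightarrow> - v \<in> V"
  unfolding V0_def by (rule span_neg)
lemma V_diff: "v \<in> V \<Longrightarrow> w \<in> V \<Longrightarrow> v - w \<in> V"
  unfolding V0_def by (rule span_diff)

lemma SS_V: "msum S S \<subseteq> V"
  using SV0 V_add unfolding msum_def by blast

lemma Sh_sub: "Sh \<subseteq> Rd - {0}" unfolding short_roots_def by blast
lemma Lg_sub: "Lg \<subseteq> Rd - {0}" unfolding long_roots_def short_roots_def by blast
lemma ShLg: "Rd - {0} = Sh \<union> Lg" unfolding long_roots_def short_roots_def by blast
lemma ShLg_disj: "Sh \<inter> Lg = {}" unfolding long_roots_def by blast

lemma S0: "0 \<in> S" using semS unfolding semilattice_def by blast
lemma L0: "0 \<in> L" using semL unfolding semilattice_def by blast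

lemma semi_neg: "semilattice X \<Longrightarrow> s \<in> X \<Longrightarrow> - s \<in> X"
  unfolding semilattice_def
proof -
  assume "fg_lattice (zspan X) \<and> 0 \<in> X \<and> (\<forall>s\<in>X. \<forall>x\<in>zspan X. s + 2 *\<^sub>R x \<in> X)" "s \<in> X"
  moreover have "- s \<in> zspan X" using zspan_neg[OF zspan_sup] \<open>s \<in> X\<close> by blast
  ultimately have "s + 2 *\<^sub>R (- s) \<in> X" by blast
  thus "- s \<in> X" by (simp add: scaleR_2)
qed

lemma R_cases:
  assumes "r \<in> R"
  shows "r \<in> msum S S \<or> (\<exists>a\<in>Sh. \<exists>s\<in>S. r = a + s) \<or> (\<exists>a\<in>Lg. \<exists>l\<in>L. r = a + l)"
  using assms Rdesc unfolding RSL_def msum_def by blast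

lemma Rx_char: "Rx B R = R - msum S S"
proof
  show "Rx B R \<subseteq> R - msum S S"
  proof
    fix r assume "r \<in> Rx B R"
    hence "r \<in> R" "B r r \<noteq> 0" unfolding Rx_def by auto
    moreover have "r \<notin> msum S S" using SS_V rad calculation(2) by blast
    ultimately show "r \<in> R - msum S S" by blast
  qed
  show "R - msum S S \<subseteq> Rx B R"
    using R0desc unfolding R0_def Rx_def by blast
qed

lemma Rx_form:
  assumes "r \<in> Rx B R"
  shows "(\<exists>a\<in>Sh. \<exists>s\<in>S. r = a + s) \<or> (\<exists>a\<in>Lg. \<exists>l\<in>L. r = a + l)"
  using R_cases assms Rx_char by blast

lemma Rx_form2:
  assumes "r \<in> Rx B R"
  obtains a v where "a \<in> Rd - {0}" "v \<in> V" "r = a + v"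
  using Rx_form[OF assms] Sh_sub Lg_sub SV0 LV0 by blast

lemma root_in_Rx: "a \<in> Rd - {0} \<Longrightarrow> v \<in> V \<Longrightarrow> a + v \<in> R \<Longrightarrow> a + v \<in> Rx B R"
proof -
  assume h: "a \<in> Rd - {0}" "v \<in> V" "a + v \<in> R"
  have "B (a + v) (a + v) = B a a" using B_shift[OF h(2) h(2)] .
  thus ?thesis unfolding Rx_def using Rd_pos[OF h(1)] h(3) by simp
qed

lemma Rd_Rx: "a \<in> Rd - {0} \<Longrightarrow> a \<in> Rx B R"
proof -
  assume a: "a \<in> Rd - {0}"
  have "B a a \<noteq> 0" using Rd_pos[OF a] by simp
  thus ?thesis unfolding Rx_def using a sub by blast
qed

lemma dec_S:
  assumes "g \<in> Sh" "v \<in> V" "g + v \<in> R" shows "v \<in> S"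
proof -
  have g: "g \<in> Rd - {0}" using assms(1) Sh_sub by blast
  consider "g + v \<in> msum S S" | "\<exists>a\<in>Sh. \<exists>s\<in>S. g + v = a + s" | "\<exists>a\<in>Lg. \<exists>l\<in>L. g + v = a + l"
    using R_cases[OF assms(3)] by blast
  thus ?thesis
  proof cases
    case 1
    hence "g + v \<in> V" using SS_V by blast
    hence "g = 0" using uniq[of g 0 v "g + v"] g assms(2) Rd0 by simp
    thus ?thesis using g by simp
  next
    case 2
    then obtain a s where "a \<in> Sh" "s \<in> S" "g + v = a + s" by blast
    moreover have "a = g" using uniq[of g a v s] calculation g Sh_sub SV0 assms(2) by blast
    ultimately show ?thesis by simp
  next
    case 3
    then obtain a l where "a \<in> Lg" "l \<in> L" "g + v = a + l" by blast
    moreover have "a = g" using uniq[of g a v l] calculation g Lg_sub LV0 assms(2) by blast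
    ultimately show ?thesis using ShLg_disj assms(1) by blast
  qed
qed

lemma dec_L:
  assumes "g \<in> Lg" "v \<in> V" "g + v \<in> R" shows "v \<in> L"
proof -
  have g: "g \<in> Rd - {0}" using assms(1) Lg_sub by blast
  consider "g + v \<in> msum S S" | "\<exists>a\<in>Sh. \<exists>s\<in>S. g + v = a + s" | "\<exists>a\<in>Lg. \<exists>l\<in>L. g + v = a + l"
    using R_cases[OF assms(3)] by blast
  thus ?thesis
  proof cases
    case 1
    hence "g + v \<in> V" using SS_V by blast
    hence "g = 0" using uniq[of g 0 v "g + v"] g assms(2) Rd0 by simp
    thus ?thesis using g by simp
  next
    case 2
    then obtain a s where "a \<in> Sh" "s \<in> S" "g + v = a + s" by blast
    moreover have "a = g" using uniq[of g a v s] calculation g Sh_sub SV0 assms(2) by blast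
    ultimately show ?thesis using ShLg_disj assms(1) by blast
  next
    case 3
    then obtain a l where "a \<in> Lg" "l \<in> L" "g + v = a + l" by blast
    moreover have "a = g" using uniq[of g a v l] calculation g Lg_sub LV0 assms(2) by blast
    ultimately show ?thesis by simp
  qed
qed

lemma ears_string: "a \<in> Rx B R \<Longrightarrow> b \<in> R \<Longrightarrow> \<exists>d u :: nat.
        {k::int. b + of_int k *\<^sub>R a \<in> R} = {- int d .. int u} \<and>
        2 * B b a / B a a = real d - real u"
  using ears unfolding ears_def by (elim conjE) blast

lemma ears_noniso: "s \<in> R0 B R \<Longrightarrow> \<exists>a\<in>Rx B R. a + s \<in> R"
  using ears unfolding ears_def by (elim conjE) blast

lemma ears_conn: "\<not> (\<exists>A C. A \<noteq> {} \<and> C \<noteq> {} \<and> A \<union> C = Rx B R \<and> (\<forall>a\<in>A. \<forall>c\<in>C. B a c = 0))"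
  using ears unfolding ears_def by (elim conjE) assumption

lemma string_plus:
  assumes "a \<in> Rx B R" "b \<in> R" "B b a < 0" shows "b + a \<in> R"
proof -
  obtain d u :: nat where du: "{k::int. b + of_int k *\<^sub>R a \<in> R} = {- int d .. int u}"
    "2 * B b a / B a a = real d - real u"
    using ears_string[OF assms(1,2)] by blast
  have "B a a \<noteq> 0" using assms(1) unfolding Rx_def by auto
  hence aa: "B a a > 0" using Bpos[of a] by linarith
  have "2 * B b a < 0" using assms(3) by simp
  hence "2 * B b a / B a a < 0" using aa divide_neg_pos by blast
  hence "u \<ge> 1" using du(2) by linarith
  hence "(1::int) \<in> {- int d .. int u}" by simp
  hence "b + of_int 1 *\<^sub>R a \<in> R" using du(1) by blast
  thus ?thesis by simp
qed

lemma Rd_neg: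
  assumes a: "a \<in> Rd" shows "- a \<in> Rd"
proof (cases "a = 0")
  case True thus ?thesis using a by simp
next
  case False
  have a0: "a \<in> Rd - {0}" using a False by blast
  have "B a a > 0" using Rd_pos a0 by blast
  hence e: "2 * B a a / B a a = 2" by simp
  have "a - (2 * B a a / B a a) *\<^sub>R a \<in> Rd" using cartan[OF a0 a] by blast
  hence "a - 2 *\<^sub>R a \<in> Rd" unfolding e .
  moreover have "a - 2 *\<^sub>R a = - a" by (simp add: scaleR_2)
  ultimately show ?thesis by simp
qed

lemma Bneg: "B (- a) (- a) = B a a"
  by (simp add: bilinear_lneg[OF bl] bilinear_rneg[OF bl])

lemma Sh_neg: assumes a: "a \<in> Sh" shows "- a \<in> Sh"
proof -
  have "a \<in> Rd - {0}" "\<forall>b\<in>Rd - {0}. B a a \<le> B b b" using a unfolding short_roots_def by auto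
  thus ?thesis unfolding short_roots_def using Rd_neg Bneg by auto
qed

lemma Lg_neg: "a \<in> Lg \<Longrightarrow> - a \<in> Lg"
proof -
  assume a: "a \<in> Lg"
  hence "- a \<in> Rd - {0}" using Lg_sub Rd_neg by auto
  moreover have "- a \<notin> Sh" using Sh_neg[of "-a"] a ShLg_disj by auto
  ultimately show ?thesis unfolding long_roots_def by blast
qed

lemma Sh_norm: "a \<in> Sh \<Longrightarrow> b \<in> Sh \<Longrightarrow> B a a = B b b"
proof -
  assume a: "a \<in> Sh" and b: "b \<in> Sh"
  have "B a a \<le> B b b" using a b unfolding short_roots_def by blast
  moreover have "B b b \<le> B a a" using a b unfolding short_roots_def by blast
  ultimately show ?thesis by simp
qed

lemma Sh_le: "a \<in> Sh \<Longrightarrow> b \<in> Rd - {0} \<Longrightarrow> B a a \<le> B b b"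
  unfolding short_roots_def by blast

lemma Rd_nonzero: "Rd - {0} \<noteq> {}"
proof
  assume e: "Rd - {0} = {}"
  have "0 \<in> R0 B R" using S0 R0desc unfolding msum_def by force
  then obtain a where a: "a \<in> Rx B R" using ears_noniso by blast
  obtain g v where "g \<in> Rd - {0}" "v \<in> V" "a = g + v" by (rule Rx_form2[OF a])
  thus False using e by blast
qed

lemma Sh_nonempty: "Sh \<noteq> {}"
proof -
  have fin: "finite ((\<lambda>a. B a a) ` (Rd - {0}))" using finRd by simp
  have ne: "(\<lambda>a. B a a) ` (Rd - {0}) \<noteq> {}" using Rd_nonzero by simp
  have "Min ((\<lambda>a. B a a) ` (Rd - {0})) \<in> (\<lambda>a. B a a) ` (Rd - {0})" by (rule Min_in[OF fin ne])
  then obtain a where a: "a \<in> Rd - {0}" "Min ((\<lambda>a. B a a) ` (Rd - {0})) = B a a" by (rule imageE)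
  note a = a(1) a(2)[symmetric]
  have "\<forall>b\<in>Rd - {0}. B a a \<le> B b b"
  proof
    fix b assume "b \<in> Rd - {0}"
    hence "Min ((\<lambda>a. B a a) ` (Rd - {0})) \<le> B b b" using Min_le[OF fin] by blast
    thus "B a a \<le> B b b" using a(2) by simp
  qed
  hence "a \<in> Sh" unfolding short_roots_def using a(1) by blast
  thus ?thesis by blast
qed

lemma Lg_big: "b \<in> Lg \<Longrightarrow> a \<in> Sh \<Longrightarrow> B a a < B b b"
proof -
  assume b: "b \<in> Lg" and a: "a \<in> Sh"
  have "b \<in> Rd - {0}" "b \<notin> Sh" using b unfolding long_roots_def by auto
  hence "\<not> (\<forall>c\<in>Rd - {0}. B b b \<le> B c c)" unfolding short_roots_def by blast
  then obtain c where c: "c \<in> Rd - {0}" "\<not> B b b \<le> B c c" by blast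
  hence c: "c \<in> Rd - {0}" "B b b > B c c" by auto
  have "B a a \<le> B c c" using Sh_le[OF a c(1)] .
  thus ?thesis using c by simp
qed

lemma strict_cs:
  assumes "a \<in> span Rd" "b \<in> span Rd" "a \<noteq> 0" "\<forall>t. b \<noteq> t *\<^sub>R a"
  shows "(B a b)^2 < B a a * B b b"
proof -
  have aa: "B a a > 0" using posdef assms by blast
  define t where "t = B a b / B a a"
  have "b - t *\<^sub>R a \<noteq> 0" using assms(4) by auto
  moreover have "b - t *\<^sub>R a \<in> span Rd" using assms(1,2) by (simp add: span_diff span_scale)
  ultimately have "0 < B (b - t *\<^sub>R a) (b - t *\<^sub>R a)" using posdef by blast
  also have "B (b - t *\<^sub>R a) (b - t *\<^sub>R a) = B b b - 2 * t * B a b + t * t * B a a"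
    by (simp add: Bsimps Bsym[of b a] algebra_simps)
  also have "\<dots> = B b b - (B a b)^2 / B a a" using aa by (simp add: t_def field_simps power2_eq_square)
  finally have "(B a b)^2 / B a a < B b b" by simp
  thus ?thesis using aa by (simp add: field_simps)
qed

lemma not_prop:
  assumes "a \<in> Rd - {0}" "b \<in> Rd - {0}" "b \<noteq> a" "b \<noteq> - a"
  shows "\<forall>t. b \<noteq> t *\<^sub>R a"
proof
  fix t show "b \<noteq> t *\<^sub>R a"
  proof
    assume e: "b = t *\<^sub>R a"
    hence "t *\<^sub>R a \<in> Rd - {0}" using assms(2) by simp
    hence "t = 1 \<or> t = -1" using red assms(1) unfolding reduced_rs_def by blast
    thus False using e assms(3,4) by auto
  qed
qed

lemma sum_root:
  assumes a: "a \<in> Rd - {0}" and b: "b \<in> Rd - {0}" and np: "\<forall>t. b \<noteq> t *\<^sub>R a"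
    and neg: "B a b < 0" and le: "B a a \<le> B b b"
  shows "a + b \<in> Rd" "B (a + b) (a + b) = B a a" "2 * B a b = - B b b"
proof -
  have bb: "B b b > 0" using Rd_pos b by blast
  have aa: "B a a > 0" using Rd_pos a by blast
  define n where "n = 2 * B a b / B b b"
  have nZ: "n \<in> \<int>" and nR: "a - n *\<^sub>R b \<in> Rd" using cartan[OF b, of a] a unfolding n_def by auto
  have cs: "(B a b)^2 < B a a * B b b"
    using strict_cs[of a b] a b np span_base by blast
  have "n^2 = 4 * (B a b)^2 / (B b b)^2" unfolding n_def by (simp add: power_divide power_mult_distrib)
  also have "\<dots> < 4 * (B a a * B b b) / (B b b)^2" using cs bb by (simp add: divide_strict_right_mono)
  also have "\<dots> = 4 * B a a / B b b" using bb by (simp add: power2_eq_square)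
  also have "\<dots> \<le> 4" using le bb by (simp add: divide_le_eq)
  finally have n2: "n^2 < 4" .
  have nneg: "n < 0" unfolding n_def using neg bb by (simp add: divide_neg_pos)
  obtain k where k: "n = of_int k" using nZ Ints_cases by blast
  have "k < 0" using nneg k by simp
  moreover have "k^2 < 4" using n2 k by (metis of_int_less_iff of_int_numeral of_int_power)
  moreover have "k \<ge> -1"
  proof (rule ccontr)
    assume "\<not> k \<ge> -1"
    hence "2 \<le> - k" by simp
    hence "2^2 \<le> (-k)^2" by (rule power_mono) simp
    thus False using \<open>k^2 < 4\<close> by simp
  qed
  ultimately have "k = -1" by simp
  hence n1: "n = -1" using k by simp
  thus "a + b \<in> Rd" using nR by simp
  have "2 * B a b / B b b = -1" using n1 unfolding n_def .
  hence "2 * B a b = - 1 * B b b" using bb by (simp add: divide_eq_eq)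
  thus e: "2 * B a b = - B b b" by simp
  have "B (a + b) (a + b) = B a a + B a b + B b a + B b b" by (simp add: Bsimps)
  thus "B (a + b) (a + b) = B a a" using e Bsym[of b a] by linarith
qed

end

context ctx begin

lemma irred:
  assumes cov: "A0 \<union> C0 = Rd - {0}" and orth: "\<forall>a\<in>A0. \<forall>c\<in>C0. B a c = 0"
  shows "A0 = {} \<or> C0 = {}"
proof (rule ccontr)
  assume ne: "\<not> (A0 = {} \<or> C0 = {})"
  then obtain a0 c0 where a0: "a0 \<in> A0" and c0: "c0 \<in> C0" by blast
  define A where "A = {r \<in> Rx B R. \<exists>g\<in>A0. r - g \<in> V}"
  define C where "C = {r \<in> Rx B R. \<exists>g\<in>C0. r - g \<in> V}"
  have V0: "0 \<in> V" unfolding V0_def by (rule span_zero)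
  have a0R: "a0 \<in> Rx B R" using a0 cov Rd_Rx[of a0] by blast
  have "a0 - a0 \<in> V" using V0 by simp
  hence "a0 \<in> A" unfolding A_def using a0 a0R by blast
  hence An: "A \<noteq> {}" by blast
  have c0R: "c0 \<in> Rx B R" using c0 cov Rd_Rx[of c0] by blast
  have "c0 - c0 \<in> V" using V0 by simp
  hence "c0 \<in> C" unfolding C_def using c0 c0R by blast
  hence Cn: "C \<noteq> {}" by blast
  have AC: "A \<union> C = Rx B R"
  proof
    show "A \<union> C \<subseteq> Rx B R" unfolding A_def C_def by blast
    show "Rx B R \<subseteq> A \<union> C"
    proof
      fix r assume r: "r \<in> Rx B R"
      obtain g v where g: "g \<in> Rd - {0}" "v \<in> V" "r = g + v" by (rule Rx_form2[OF r])
      have "r - g \<in> V" using g by simp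
      thus "r \<in> A \<union> C" using g(1) cov r unfolding A_def C_def by blast
    qed
  qed
  have "\<forall>a\<in>A. \<forall>c\<in>C. B a c = 0"
  proof (intro ballI)
    fix a c assume a: "a \<in> A" and c: "c \<in> C"
    obtain g where g: "g \<in> A0" "a - g \<in> V" using a unfolding A_def by blast
    obtain h where h: "h \<in> C0" "c - h \<in> V" using c unfolding C_def by blast
    have "B a c = B (g + (a - g)) (h + (c - h))" by simp
    also have "\<dots> = B g h" by (rule B_shift[OF g(2) h(2)])
    also have "\<dots> = 0" using orth g(1) h(1) by blast
    finally show "B a c = 0" .
  qed
  thus False using ears_conn An Cn AC by blast
qed

lemma Sh_short_char: "x \<in> Rd - {0} \<Longrightarrow> a \<in> Sh \<Longrightarrow> B x x = B a a \<Longrightarrow> x \<in> Sh"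
  unfolding short_roots_def by auto

lemma L_sub_S:
  assumes "Lg \<noteq> {}" shows "L \<subseteq> S"
proof -
  have "\<exists>a\<in>Sh. \<exists>b\<in>Lg. B a b \<noteq> 0"
  proof (rule ccontr)
    assume "\<not> ?thesis"
    hence "\<forall>a\<in>Sh. \<forall>c\<in>Lg. B a c = 0" by blast
    hence "Sh = {} \<or> Lg = {}" using irred[of Sh Lg] ShLg by blast
    thus False using assms Sh_nonempty by blast
  qed
  then obtain a b0 where ab0: "a \<in> Sh" "b0 \<in> Lg" "B a b0 \<noteq> 0" by blast
  obtain b where b: "b \<in> Lg" "B a b < 0"
  proof (cases "B a b0 < 0")
    case True thus ?thesis using that ab0 by blast
  next
    case False
    hence "B a (- b0) < 0" using ab0(3) by (simp add: bilinear_rneg[OF bl])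
    thus ?thesis using that Lg_neg[OF ab0(2)] by blast
  qed
  have a0: "a \<in> Rd - {0}" using ab0(1) Sh_sub by blast
  have b0: "b \<in> Rd - {0}" using b(1) Lg_sub by blast
  have lt: "B a a < B b b" using Lg_big[OF b(1) ab0(1)] .
  have "b \<noteq> a" "b \<noteq> - a" using lt Bneg[of a] by auto
  hence np: "\<forall>t. b \<noteq> t *\<^sub>R a" using not_prop[OF a0 b0] by blast
  have sr: "a + b \<in> Rd" "B (a + b) (a + b) = B a a"
    using sum_root[OF a0 b0 np b(2)] lt by auto
  have "a + b \<noteq> 0" using sr(2) Rd_pos[OF a0] bilinear_lzero[OF bl] by auto
  hence abS: "a + b \<in> Sh" using Sh_short_char[OF _ ab0(1) sr(2)] sr(1) by blast
  show ?thesis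
  proof
    fix l assume l: "l \<in> L"
    have lV: "l \<in> V" using l LV0 by blast
    have "b + l \<in> R" using Rdesc b(1) l unfolding RSL_def msum_def by blast
    moreover have "B (b + l) a < 0" using B_shift[OF lV, of 0 b a] b(2) Bsym[of b a] unfolding V0_def
      by (simp add: span_zero)
    ultimately have "(b + l) + a \<in> R" using string_plus Rd_Rx[OF a0] by blast
    hence "(a + b) + l \<in> R" by (simp add: algebra_simps)
    thus "l \<in> S" using dec_S[OF abS lV] by blast
  qed
qed

lemma S_closed_of_pair:
  assumes a: "a \<in> Sh" and b: "b \<in> Sh" and neg: "B a b < 0" and np: "b \<noteq> a" "b \<noteq> - a"
  shows "\<forall>s\<in>S. \<forall>t\<in>S. s + t \<in> S"
proof (intro ballI)
  fix s t assume s: "s \<in> S" and t: "t \<in> S"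
  have a0: "a \<in> Rd - {0}" using a Sh_sub by blast
  have b0: "b \<in> Rd - {0}" using b Sh_sub by blast
  have np': "\<forall>t. b \<noteq> t *\<^sub>R a" using not_prop[OF a0 b0 np] .
  have sr: "a + b \<in> Rd" "B (a + b) (a + b) = B a a"
    using sum_root[OF a0 b0 np' neg] Sh_norm[OF a b] by auto
  have "a + b \<noteq> 0" using sr(2) Rd_pos[OF a0] bilinear_lzero[OF bl] by auto
  hence abS: "a + b \<in> Sh" using Sh_short_char[OF _ a sr(2)] sr(1) by blast
  have sV: "s \<in> V" and tV: "t \<in> V" using s t SV0 by auto
  have "a + s \<in> R" using Rdesc a s unfolding RSL_def msum_def by blast
  hence as: "a + s \<in> Rx B R" using root_in_Rx[OF a0 sV] by blast
  have "b + t \<in> R" using Rdesc b t unfolding RSL_def msum_def by blast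
  moreover have "B (b + t) (a + s) < 0" using B_shift[OF tV sV, of b a] neg Bsym[of b a] by simp
  ultimately have "(b + t) + (a + s) \<in> R" using string_plus[OF as] by blast
  hence "(a + b) + (s + t) \<in> R" by (simp add: algebra_simps)
  thus "s + t \<in> S" using dec_S[OF abS V_add[OF sV tV]] by blast
qed

end

lemma semilattice_inter:
  assumes sem: "semilattice X0" and W: "subgrp W"
  shows "semilattice (X0 \<inter> W)"
proof -
  obtain F0 where F0: "finite F0" "zspan F0 = zspan X0"
    using sem unfolding semilattice_def fg_lattice_def by blast
  have sub: "zspan (X0 \<inter> W) \<subseteq> zspan X0" by (rule zspan_mono) blast
  obtain B' where "finite B'" "zindep B'" "zspan B' = zspan (X0 \<inter> W)"
    using fg_subgroup[OF F0(1) subgrp_zspan] sub F0(2) by blast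
  hence fg: "fg_lattice (zspan (X0 \<inter> W))" unfolding fg_lattice_def using subgrp_zspan by blast
  have zero: "0 \<in> X0 \<inter> W" using sem subgrp_0[OF W] unfolding semilattice_def by blast
  have cl: "\<forall>s\<in>X0 \<inter> W. \<forall>x\<in>zspan (X0 \<inter> W). s + 2 *\<^sub>R x \<in> X0 \<inter> W"
  proof (intro ballI)
    fix s x assume s: "s \<in> X0 \<inter> W" and x: "x \<in> zspan (X0 \<inter> W)"
    have "s + 2 *\<^sub>R x \<in> X0" using sem s x sub unfolding semilattice_def by blast
    moreover have "x \<in> W" using x zspan_least[OF W, of "X0 \<inter> W"] by blast
    hence "s + 2 *\<^sub>R x \<in> W" using s subgrp_add[OF W] subgrp_smult[OF W, of x 2] by simp
    ultimately show "s + 2 *\<^sub>R x \<in> X0 \<inter> W" by blast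
  qed
  show ?thesis unfolding semilattice_def using fg zero cl by blast
qed

context ctx begin

lemma ears_negR: "uminus ` R = R"
  using ears unfolding ears_def by (elim conjE) assumption

lemma ears_neg: "x \<in> R \<Longrightarrow> - x \<in> R"
proof -
  assume "x \<in> R"
  hence "- x \<in> uminus ` R" by (rule imageI)
  thus ?thesis unfolding ears_negR .
qed

lemma ears_2aR: "\<forall>a\<in>Rx B R. 2 *\<^sub>R a \<notin> R"
  using ears unfolding ears_def by (elim conjE) assumption

lemma ears_2a: "a \<in> Rx B R \<Longrightarrow> 2 *\<^sub>R a \<notin> R"
  using ears_2aR by blast

lemma ears_disc: "discrete_set R"
  using ears unfolding ears_def by (elim conjE) assumption

lemma Rx_notV: "x \<in> Rx B R \<Longrightarrow> x \<notin> V"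
  unfolding Rx_def using rad by auto

end

locale ctxT = ctx +
  fixes T :: "'a set"
  assumes T_sub: "T \<subseteq> Rx B R" and T_Rd: "Rd - {0} \<subseteq> T"
  assumes LS: "Lg \<noteq> {} \<Longrightarrow> L \<subseteq> S"
begin

definition "W = zspan T"
definition "S' = S \<inter> W"
definition "L' = L \<inter> W"
definition "X = W \<inter> Rx B R"
definition "R' = X \<union> msum S' S'"

lemma sgW: "subgrp W" unfolding W_def by (rule subgrp_zspan)

lemma W_Rd: "a \<in> Rd \<Longrightarrow> a \<in> W"
  unfolding W_def using T_Rd zspan_sup[of a T] by (cases "a = 0") auto

lemma tR: "tildeR B R T = X \<union> (V \<inter> mdiff X X)"
  unfolding tildeR_def X_def W_def by (simp add: Let_def)

lemma S'0: "0 \<in> S'" unfolding S'_def using S0 subgrp_0[OF sgW] by blast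
lemma L'0: "0 \<in> L'" unfolding L'_def using L0 subgrp_0[OF sgW] by blast
lemma S'neg: "s \<in> S' \<Longrightarrow> - s \<in> S'" unfolding S'_def using semi_neg[OF semS] subgrp_neg[OF sgW] by blast
lemma L'S': "Lg \<noteq> {} \<Longrightarrow> L' \<subseteq> S'" unfolding L'_def S'_def using LS by blast

lemma X_char: "X = msum Sh S' \<union> msum Lg L'"
proof
  show "X \<subseteq> msum Sh S' \<union> msum Lg L'"
  proof
    fix x assume x: "x \<in> X"
    hence xW: "x \<in> W" and xR: "x \<in> Rx B R" unfolding X_def by auto
    consider "\<exists>a\<in>Sh. \<exists>s\<in>S. x = a + s" | "\<exists>a\<in>Lg. \<exists>l\<in>L. x = a + l" using Rx_form[OF xR] by blast
    thus "x \<in> msum Sh S' \<union> msum Lg L'"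
    proof cases
      case 1
      then obtain a s where as: "a \<in> Sh" "s \<in> S" "x = a + s" by blast
      have "s = x - a" using as by simp
      hence "s \<in> W" using zspan_diff[of x T a] xW W_Rd[of a] as(1) Sh_sub unfolding W_def by blast
      thus ?thesis using as unfolding msum_def S'_def by blast
    next
      case 2
      then obtain a s where as: "a \<in> Lg" "s \<in> L" "x = a + s" by blast
      have "s = x - a" using as by simp
      hence "s \<in> W" using zspan_diff[of x T a] xW W_Rd[of a] as(1) Lg_sub unfolding W_def by blast
      thus ?thesis using as unfolding msum_def L'_def by blast
    qed
  qed
  show "msum Sh S' \<union> msum Lg L' \<subseteq> X"
  proof
    fix x assume "x \<in> msum Sh S' \<union> msum Lg L'"
    then consider "\<exists>a\<in>Sh. \<exists>s\<in>S'. x = a + s" | "\<exists>a\<in>Lg. \<exists>s\<in>L'. x = a + s" unfolding msum_def by blast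
    thus "x \<in> X"
    proof cases
      case 1
      then obtain a s where as: "a \<in> Sh" "s \<in> S'" "x = a + s" by blast
      have a0: "a \<in> Rd - {0}" using as(1) Sh_sub by blast
      have sV: "s \<in> V" using as(2) SV0 unfolding S'_def by blast
      have "x \<in> R" using Rdesc as unfolding RSL_def msum_def S'_def by blast
      hence "x \<in> Rx B R" using root_in_Rx[OF a0 sV] as(3) by simp
      moreover have "x \<in> W" using as W_Rd[of a] a0 subgrp_add[OF sgW] unfolding S'_def by blast
      ultimately show ?thesis unfolding X_def by blast
    next
      case 2
      then obtain a s where as: "a \<in> Lg" "s \<in> L'" "x = a + s" by blast
      have a0: "a \<in> Rd - {0}" using as(1) Lg_sub by blast
      have sV: "s \<in> V" using as(2) LV0 unfolding L'_def by blast
      have "x \<in> R" using Rdesc as unfolding RSL_def msum_def L'_def by blast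
      hence "x \<in> Rx B R" using root_in_Rx[OF a0 sV] as(3) by simp
      moreover have "x \<in> W" using as W_Rd[of a] a0 subgrp_add[OF sgW] unfolding L'_def by blast
      ultimately show ?thesis unfolding X_def by blast
    qed
  qed
qed

lemma X_form: "x \<in> X \<Longrightarrow> \<exists>g s. g \<in> Rd - {0} \<and> s \<in> S' \<and> x = g + s"
proof -
  assume "x \<in> X"
  then consider "\<exists>a\<in>Sh. \<exists>s\<in>S'. x = a + s" | "\<exists>a\<in>Lg. \<exists>s\<in>L'. x = a + s"
    unfolding X_char msum_def by blast
  thus ?thesis
  proof cases
    case 1 thus ?thesis using Sh_sub by blast
  next
    case 2
    then obtain a s where "a \<in> Lg" "s \<in> L'" "x = a + s" by blast
    moreover have "L' \<subseteq> S'" using L'S' calculation(1) by blast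
    ultimately show ?thesis using Lg_sub by blast
  qed
qed

lemma S'V: "S' \<subseteq> V" unfolding S'_def using SV0 by blast

lemma X_notV: "x \<in> X \<Longrightarrow> x \<notin> V" unfolding X_def using Rx_notV by blast

lemma msumS'_V: "msum S' S' \<subseteq> V" using S'V V_add unfolding msum_def by blast

lemma tR_eq: "tildeR B R T = R'"
proof -
  have "V \<inter> mdiff X X = msum S' S'"
  proof
    show "V \<inter> mdiff X X \<subseteq> msum S' S'"
    proof
      fix z assume z: "z \<in> V \<inter> mdiff X X"
      then obtain x y where xy: "x \<in> X" "y \<in> X" "z = x - y" unfolding mdiff_def by blast
      obtain g s where gs: "g \<in> Rd - {0}" "s \<in> S'" "x = g + s" using X_form[OF xy(1)] by blast
      obtain h t where ht: "h \<in> Rd - {0}" "t \<in> S'" "y = h + t" using X_form[OF xy(2)] by blast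
      have "g - h = z - s + t" using xy(3) gs(3) ht(3) by (simp add: algebra_simps)
      moreover have "z - s + t \<in> V" using z gs(2) ht(2) S'V V_diff[of z s] V_add[of "z - s" t] by blast
      ultimately have "g - h \<in> V" by simp
      hence "g = h" using uniq_V gs(1) ht(1) by blast
      hence "z = s + (- t)" using xy(3) gs(3) ht(3) by simp
      thus "z \<in> msum S' S'" using gs(2) S'neg[OF ht(2)] unfolding msum_def by blast
    qed
    show "msum S' S' \<subseteq> V \<inter> mdiff X X"
    proof
      fix z assume z: "z \<in> msum S' S'"
      then obtain s t where st: "s \<in> S'" "t \<in> S'" "z = s + t" unfolding msum_def by blast
      obtain a where a: "a \<in> Sh" using Sh_nonempty by blast
      have "a + s \<in> X" "a + (- t) \<in> X" unfolding X_char msum_def using a st S'neg by blast+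
      moreover have "z = (a + s) - (a + (- t))" using st by simp
      ultimately have "z \<in> mdiff X X" unfolding mdiff_def by blast
      thus "z \<in> V \<inter> mdiff X X" using z msumS'_V by blast
    qed
  qed
  thus ?thesis unfolding tR R'_def by simp
qed

lemma R'_RSL: "R' = RSL B Rd S' L'"
  unfolding R'_def RSL_def X_char by blast

lemma X_sub_R: "X \<subseteq> R" unfolding X_def Rx_def by blast

lemma R'_sub: "R' \<subseteq> R"
proof -
  have "msum S' S' \<subseteq> msum S S" unfolding S'_def msum_def by blast
  hence "msum S' S' \<subseteq> R" using Rdesc unfolding RSL_def by blast
  thus ?thesis unfolding R'_def using X_sub_R by blast
qed

lemma S'W: "S' \<subseteq> W" unfolding S'_def by blast

lemma R'_W: "R' \<subseteq> W"
  unfolding R'_def X_def msum_def using S'W subgrp_add[OF sgW] by blast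

lemma Rx_R': "Rx B R' = X"
proof
  show "Rx B R' \<subseteq> X"
  proof
    fix x assume x: "x \<in> Rx B R'"
    hence "x \<in> R'" "B x x \<noteq> 0" unfolding Rx_def by auto
    moreover have "x \<notin> V" using rad calculation(2) by metis
    hence "x \<notin> msum S' S'" using msumS'_V by blast
    ultimately show "x \<in> X" unfolding R'_def by blast
  qed
  show "X \<subseteq> Rx B R'"
  proof
    fix x assume x: "x \<in> X"
    hence "B x x \<noteq> 0" unfolding X_def Rx_def by blast
    moreover have "x \<in> R'" using x unfolding R'_def by blast
    ultimately show "x \<in> Rx B R'" unfolding Rx_def by blast
  qed
qed

end

context ctxT begin

lemma notRx_SS: "r \<in> R \<Longrightarrow> r \<notin> Rx B R \<Longrightarrow> r \<in> msum S S"
  using Rx_char by blast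

lemma msumS'_zspan: "msum S' S' \<subseteq> zspan S'"
  unfolding msum_def using zspan_sup zspan_add by blast

lemma Rd_X: "a \<in> Rd - {0} \<Longrightarrow> a \<in> X"
proof -
  assume a: "a \<in> Rd - {0}"
  then consider "a \<in> Sh" | "a \<in> Lg" using ShLg by blast
  thus "a \<in> X"
  proof cases
    case 1
    have "a + 0 \<in> msum Sh S'" unfolding msum_def using 1 S'0 by blast
    thus ?thesis unfolding X_char by simp
  next
    case 2
    have "a + 0 \<in> msum Lg L'" unfolding msum_def using 2 L'0 by blast
    thus ?thesis unfolding X_char by simp
  qed
qed

lemma R'_closed:
  assumes CL: "\<And>x. x \<in> msum S S \<Longrightarrow> x \<in> zspan S' \<Longrightarrow> x \<in> msum S' S'"
    and a: "a \<in> R'" and b: "b \<in> R'" and ab: "a + b \<in> R"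
  shows "a + b \<in> R'"
proof (cases "a + b \<in> Rx B R")
  case True
  have "a + b \<in> W" using R'_W a b subgrp_add[OF sgW] by blast
  thus ?thesis using True unfolding R'_def X_def by blast
next
  case False
  have abS: "a + b \<in> msum S S" using notRx_SS[OF ab False] .
  hence abV: "a + b \<in> V" using SS_V by blast
  show ?thesis
  proof (cases "a \<in> X")
    case aX: True
    show ?thesis
    proof (cases "b \<in> X")
      case bX: True
      obtain g s where gs: "g \<in> Rd - {0}" "s \<in> S'" "a = g + s" using X_form[OF aX] by blast
      obtain h t where ht: "h \<in> Rd - {0}" "t \<in> S'" "b = h + t" using X_form[OF bX] by blast
      have "g - (- h) = (a + b) - s - t" using gs(3) ht(3) by (simp add: algebra_simps)
      moreover have "(a + b) - s - t \<in> V" using abV gs(2) ht(2) S'V V_diff by blast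
      ultimately have "g - (- h) \<in> V" by simp
      moreover have "- h \<in> Rd" using Rd_neg ht(1) by blast
      ultimately have "g = - h" using uniq_V gs(1) by blast
      hence "a + b = s + t" using gs(3) ht(3) by simp
      thus ?thesis using gs(2) ht(2) unfolding R'_def msum_def by blast
    next
      case bX: False
      hence "b \<in> V" using b msumS'_V unfolding R'_def by blast
      hence "a \<in> V" using abV V_diff[of "a + b" b] by simp
      thus ?thesis using X_notV aX by blast
    qed
  next
    case aX: False
    hence aS: "a \<in> msum S' S'" using a unfolding R'_def by blast
    show ?thesis
    proof (cases "b \<in> X")
      case bX: True
      have "a \<in> V" using aS msumS'_V by blast
      hence "b \<in> V" using abV V_diff[of "a + b" a] by simp
      thus ?thesis using X_notV bX by blast
    next
      case bX: False
      hence bS: "b \<in> msum S' S'" using b unfolding R'_def by blast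
      have "a + b \<in> zspan S'" using aS bS msumS'_zspan zspan_add by blast
      thus ?thesis using CL[OF abS] unfolding R'_def by blast
    qed
  qed
qed

lemma negR': "x \<in> R' \<Longrightarrow> - x \<in> R'"
proof -
  assume x: "x \<in> R'"
  show "- x \<in> R'"
  proof (cases "x \<in> X")
    case True
    hence xW: "x \<in> W" and xR: "x \<in> R" and xB: "B x x \<noteq> 0" unfolding X_def Rx_def by auto
    have "- x \<in> W" using subgrp_neg[OF sgW xW] .
    moreover have "- x \<in> R" using ears_neg[OF xR] .
    moreover have "B (- x) (- x) \<noteq> 0" using xB Bneg by simp
    ultimately have "- x \<in> X" unfolding X_def Rx_def by blast
    thus ?thesis unfolding R'_def by blast
  next
    case False
    then obtain s t where st: "s \<in> S'" "t \<in> S'" "x = s + t" using x unfolding R'_def msum_def by blast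
    have "- x = (- s) + (- t)" using st(3) by simp
    thus ?thesis using S'neg st(1,2) unfolding R'_def msum_def by blast
  qed
qed

lemma ears_R':
  assumes CL: "\<And>x. x \<in> msum S S \<Longrightarrow> x \<in> zspan S' \<Longrightarrow> x \<in> msum S' S'"
  shows "ears B R'"
  unfolding ears_def
proof (intro conjI)
  show "0 \<in> R'" using S'0 unfolding R'_def msum_def by force
  show "uminus ` R' = R'"
  proof
    show "uminus ` R' \<subseteq> R'" using negR' by blast
    show "R' \<subseteq> uminus ` R'"
    proof
      fix x assume "x \<in> R'"
      hence "- x \<in> R'" by (rule negR')
      moreover have "x = - (- x)" by simp
      ultimately show "x \<in> uminus ` R'" by blast
    qed
  qed
  show "\<forall>a\<in>Rx B R'. 2 *\<^sub>R a \<notin> R'"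
  proof
    fix a assume "a \<in> Rx B R'"
    hence "a \<in> Rx B R" unfolding Rx_R' X_def by blast
    thus "2 *\<^sub>R a \<notin> R'" using ears_2a R'_sub by blast
  qed
  show "discrete_set R'"
  proof -
    have "discrete_set R" by (rule ears_disc)
    thus ?thesis unfolding discrete_set_def using R'_sub by blast
  qed
  show "\<forall>a\<in>Rx B R'. \<forall>b\<in>R'. \<exists>d u :: nat.
        {k::int. b + of_int k *\<^sub>R a \<in> R'} = {- int d .. int u} \<and>
        2 * B b a / B a a = real d - real u"
  proof (intro ballI)
    fix a b assume a: "a \<in> Rx B R'" and b: "b \<in> R'"
    have aX: "a \<in> X" using a Rx_R' by blast
    have aRx: "a \<in> Rx B R" using aX unfolding X_def by blast
    have aR': "a \<in> R'" using aX unfolding R'_def by blast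
    have bR: "b \<in> R" using b R'_sub by blast
    obtain d u :: nat where du: "{k::int. b + of_int k *\<^sub>R a \<in> R} = {- int d .. int u}"
      "2 * B b a / B a a = real d - real u" using ears_string[OF aRx bR] by blast
    have "{k::int. b + of_int k *\<^sub>R a \<in> R'} = {k::int. b + of_int k *\<^sub>R a \<in> R}"
    proof (intro Collect_cong iffI)
      fix k :: int
      assume "b + of_int k *\<^sub>R a \<in> R'" thus "b + of_int k *\<^sub>R a \<in> R" using R'_sub by blast
    next
      fix k :: int
      assume kR: "b + of_int k *\<^sub>R a \<in> R"
      show "b + of_int k *\<^sub>R a \<in> R'"
      proof (cases "b + of_int k *\<^sub>R a \<in> Rx B R")
        case True
        have "a \<in> W" "b \<in> W" using aR' b R'_W by auto
        hence "b + of_int k *\<^sub>R a \<in> W" using subgrp_add[OF sgW] subgrp_smult[OF sgW] by blast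
        thus ?thesis using True unfolding R'_def X_def by blast
      next
        case False
        hence kV: "b + of_int k *\<^sub>R a \<in> V" using notRx_SS[OF kR] SS_V by blast
        obtain g s where gs: "g \<in> Rd - {0}" "s \<in> S'" "a = g + s" using X_form[OF aX] by blast
        show ?thesis
        proof (cases "b \<in> X")
          case False
          hence "b \<in> V" using b msumS'_V unfolding R'_def by blast
          hence kaV: "of_int k *\<^sub>R a \<in> V" using kV V_diff[of _ b] by force
          have "k = 0"
          proof (rule ccontr)
            assume "k \<noteq> 0"
            hence "a = (1 / of_int k) *\<^sub>R (of_int k *\<^sub>R a)" by simp
            hence "a \<in> V" using kaV unfolding V0_def by (metis span_scale)
            thus False using X_notV aX by blast
          qed
          thus ?thesis using b by simp
        next
          case True
          obtain h t where ht: "h \<in> Rd - {0}" "t \<in> S'" "b = h + t" using X_form[OF True] by blast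
          have "h + of_int k *\<^sub>R g = (b + of_int k *\<^sub>R a) - (t + of_int k *\<^sub>R s)"
            using gs(3) ht(3) by (simp add: algebra_simps)
          moreover have "t + of_int k *\<^sub>R s \<in> V"
            using gs(2) ht(2) S'V V_add unfolding V0_def by (metis span_scale subsetD)
          ultimately have hV: "h + of_int k *\<^sub>R g \<in> V" using kV V_diff by metis
          have "h + of_int k *\<^sub>R g \<in> span Rd" using gs(1) ht(1)
            by (intro span_add span_scale span_base) auto
          hence "h + of_int k *\<^sub>R g = 0" using span_V0_inter hV by blast
          hence "h = (- of_int k) *\<^sub>R g" by (simp add: eq_neg_iff_add_eq_0[symmetric])
          hence "(- of_int k :: real) = 1 \<or> (- of_int k :: real) = -1"
            using red gs(1) ht(1) unfolding reduced_rs_def by metis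
          hence "k = -1 \<or> k = 1" by linarith
          thus ?thesis
          proof
            assume "k = 1"
            hence "b + a \<in> R" using kR by simp
            hence "b + a \<in> R'" using R'_closed[OF CL b aR'] by blast
            thus ?thesis using \<open>k = 1\<close> by simp
          next
            assume "k = -1"
            hence "b + (- a) \<in> R" using kR by simp
            hence "b + (- a) \<in> R'" using R'_closed[OF CL b negR'[OF aR']] by blast
            thus ?thesis using \<open>k = -1\<close> by simp
          qed
        qed
      qed
    qed
    thus "\<exists>d u :: nat. {k::int. b + of_int k *\<^sub>R a \<in> R'} = {- int d .. int u} \<and>
        2 * B b a / B a a = real d - real u" using du by blast
  qed
  show "\<forall>s\<in>R0 B R'. \<exists>a\<in>Rx B R'. a + s \<in> R'"
  proof
    fix s assume s: "s \<in> R0 B R'"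
    hence "s \<in> R'" "s \<notin> X" unfolding R0_def Rx_R' by auto
    then obtain s1 s2 where st: "s1 \<in> S'" "s2 \<in> S'" "s = s1 + s2" unfolding R'_def msum_def by blast
    obtain g where g: "g \<in> Sh" using Sh_nonempty by blast
    have "g + (- s1) \<in> X" "g + s2 \<in> X" unfolding X_char msum_def using g st S'neg by blast+
    moreover have "(g + (- s1)) + s = g + s2" using st(3) by simp
    ultimately have "g + (- s1) \<in> X \<and> (g + (- s1)) + s \<in> R'" unfolding R'_def by (metis UnI1)
    thus "\<exists>a\<in>Rx B R'. a + s \<in> R'" unfolding Rx_R' by blast
  qed
  show "\<not> (\<exists>A C. A \<noteq> {} \<and> C \<noteq> {} \<and> A \<union> C = Rx B R' \<and> (\<forall>a\<in>A. \<forall>c\<in>C. B a c = 0))"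
  proof
    assume "\<exists>A C. A \<noteq> {} \<and> C \<noteq> {} \<and> A \<union> C = Rx B R' \<and> (\<forall>a\<in>A. \<forall>c\<in>C. B a c = 0)"
    then obtain A C where AC: "A \<noteq> {}" "C \<noteq> {}" "A \<union> C = X" "\<forall>a\<in>A. \<forall>c\<in>C. B a c = 0"
      unfolding Rx_R' by blast
    have X0: "0 \<notin> X" using X_notV unfolding V0_def using span_zero by blast
    have cov: "(A \<inter> Rd) \<union> (C \<inter> Rd) = Rd - {0}" using AC(3) Rd_X X0 by blast
    have orth: "\<forall>a\<in>A \<inter> Rd. \<forall>c\<in>C \<inter> Rd. B a c = 0" using AC(4) by blast
    have pick: "\<exists>g\<in>Rd - {0}. g \<in> P \<and> B a g \<noteq> 0" if P: "P \<subseteq> X" "a \<in> P" "\<forall>c\<in>X - P. B a c = 0" for P a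
    proof -
      obtain g s where gs: "g \<in> Rd - {0}" "s \<in> S'" "a = g + s" using X_form P(1,2) by blast
      have "s \<in> V" using gs(2) S'V by blast
      moreover have "(0::'a) \<in> V" unfolding V0_def by (rule span_zero)
      ultimately have "B a g = B g g" using B_shift[of s 0 g g] gs(3) by simp
      hence ne: "B a g \<noteq> 0" using Rd_pos[OF gs(1)] by simp
      hence "g \<in> P" using P(3) Rd_X[OF gs(1)] by blast
      thus ?thesis using gs(1) ne by blast
    qed
    obtain a where a: "a \<in> A" using AC(1) by blast
    have "\<forall>c\<in>X - A. B a c = 0" using AC(3,4) a by blast
    then obtain g where g: "g \<in> Rd - {0}" "g \<in> A" using pick[of A a] a AC(3) by blast
    obtain c where c: "c \<in> C" using AC(2) by blast
    have "\<forall>x\<in>X - C. B c x = 0"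
    proof
      fix x assume "x \<in> X - C"
      hence "x \<in> A" using AC(3) by blast
      hence "B x c = 0" using AC(4) c by blast
      thus "B c x = 0" using Bsym[of c x] by simp
    qed
    then obtain h where h: "h \<in> Rd - {0}" "h \<in> C" using pick[of C c] c AC(3) by blast
    have "A \<inter> Rd = {} \<or> C \<inter> Rd = {}" using irred[OF cov orth] .
    thus False using g h by blast
  qed
qed

lemma canonical_R': "canonical_sub B Rd R'"
  unfolding canonical_sub_def using R'_RSL semilattice_inter[OF semS sgW] semilattice_inter[OF semL sgW]
  unfolding S'_def L'_def by blast

end

context ctx begin

lemma B_sum_left: "finite t \<Longrightarrow> B (\<Sum>v\<in>t. u v *\<^sub>R v) w = (\<Sum>v\<in>t. u v * B v w)"
  by (induction t rule: finite_induct) (simp_all add: Bsimps)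

lemma Sh_nz: "x \<in> Sh \<Longrightarrow> x \<noteq> 0" using Sh_sub by blast

lemma Lg_not_Sh: "x \<in> Lg \<Longrightarrow> x \<notin> Sh" using ShLg_disj by blast

end

locale ctxO = ctx +
  assumes ORTH: "\<And>a b. a \<in> short_roots B Rd \<Longrightarrow> b \<in> short_roots B Rd \<Longrightarrow> b \<noteq> a \<Longrightarrow> b \<noteq> - a \<Longrightarrow> B a b = 0"
begin

lemma L1:
  assumes b: "b \<in> Lg" and e: "e \<in> Sh" and ne: "B e b \<noteq> 0"
  shows "\<exists>x\<in>Sh. \<exists>y\<in>Sh. y \<noteq> x \<and> y \<noteq> - x \<and> b = x + y \<and> (y = e \<or> y = - e)"
proof -
  define e1 where "e1 = (if B e b < 0 then e else - e)"
  have e1S: "e1 \<in> Sh" unfolding e1_def using e Sh_neg by auto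
  have neg: "B e1 b < 0" unfolding e1_def using ne by (auto simp: bilinear_lneg[OF bl])
  have e10: "e1 \<in> Rd - {0}" using e1S Sh_sub by blast
  have b0: "b \<in> Rd - {0}" using b Lg_sub by blast
  have lt: "B e1 e1 < B b b" using Lg_big[OF b e1S] .
  have "b \<noteq> e1" "b \<noteq> - e1" using lt Bneg[of e1] by auto
  hence np: "\<forall>t. b \<noteq> t *\<^sub>R e1" using not_prop[OF e10 b0] by blast
  have sr: "e1 + b \<in> Rd" "B (e1 + b) (e1 + b) = B e1 e1"
    using sum_root[OF e10 b0 np neg] lt by auto
  have "e1 + b \<noteq> 0" using sr(2) Rd_pos[OF e10] bilinear_lzero[OF bl] by auto
  hence xS: "e1 + b \<in> Sh" using Sh_short_char[OF _ e1S sr(2)] sr(1) by blast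
  define x where "x = e1 + b"
  have "- e1 \<in> Sh" using Sh_neg[OF e1S] .
  moreover have "b = x + (- e1)" unfolding x_def by simp
  moreover have "- e1 \<noteq> x"
  proof
    assume h: "- e1 = x"
    have "b = (e1 + b) - e1" by simp
    also have "\<dots> = - e1 - e1" using h unfolding x_def by simp
    also have "\<dots> = (-2) *\<^sub>R e1" by (simp add: scaleR_2)
    finally have "b = (-2) *\<^sub>R e1" .
    hence "(-2) *\<^sub>R e1 \<in> Rd - {0}" using b0 by simp
    hence "(-2::real) = 1 \<or> (-2::real) = -1" using red e10 unfolding reduced_rs_def by blast
    thus False by simp
  qed
  moreover have "- e1 \<noteq> - x"
  proof
    assume "- e1 = - x" hence "b = 0" unfolding x_def by simp
    thus False using b0 by simp
  qed
  moreover have "- e1 = e \<or> - e1 = - e" unfolding e1_def by auto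
  ultimately show ?thesis using xS unfolding x_def by blast
qed

lemma L2: assumes b: "b \<in> Lg" shows "\<exists>e\<in>Sh. B e b \<noteq> 0"
proof (rule ccontr)
  assume nb: "\<not> ?thesis"
  define A0 where "A0 = {g \<in> Lg. \<forall>e\<in>Sh. B e g = 0}"
  define C0 where "C0 = (Rd - {0}) - A0"
  have cov: "A0 \<union> C0 = Rd - {0}" unfolding A0_def C0_def using Lg_sub by blast
  have orth: "\<forall>a\<in>A0. \<forall>c\<in>C0. B a c = 0"
  proof (intro ballI)
    fix a c assume a: "a \<in> A0" and c: "c \<in> C0"
    show "B a c = 0"
    proof (cases "c \<in> Sh")
      case True
      hence "B c a = 0" using a unfolding A0_def by blast
      thus ?thesis using Bsym[of a c] by simp
    next
      case False
      hence cL: "c \<in> Lg" using c ShLg unfolding C0_def by blast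
      hence "\<exists>e\<in>Sh. B e c \<noteq> 0" using c unfolding C0_def A0_def by blast
      then obtain e where "e \<in> Sh" "B e c \<noteq> 0" by blast
      then obtain x y where xy: "x \<in> Sh" "y \<in> Sh" "c = x + y" using L1[OF cL] by blast
      have "B x a = 0" "B y a = 0" using a xy unfolding A0_def by auto
      hence "B a x = 0" "B a y = 0" using Bsym[of a x] Bsym[of a y] by auto
      thus ?thesis using xy(3) by (simp add: bilinear_radd[OF bl])
    qed
  qed
  have "b \<in> A0" using b nb unfolding A0_def by blast
  moreover obtain s where "s \<in> Sh" using Sh_nonempty by blast
  hence "s \<in> C0" unfolding C0_def A0_def using Sh_sub ShLg_disj by blast
  ultimately show False using irred[OF cov orth] by blast
qed

lemma Lg_form: "b \<in> Lg \<Longrightarrow> \<exists>x\<in>Sh. \<exists>y\<in>Sh. y \<noteq> x \<and> y \<noteq> - x \<and> b = x + y"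
  using L1 L2 by blast

lemma PAIR:
  assumes x: "x \<in> Sh" and y: "y \<in> Sh" and np: "y \<noteq> x" "y \<noteq> - x" and s: "x + y \<in> Rd"
  shows "x - y \<in> Rd"
proof -
  have y0: "y \<in> Rd - {0}" using y Sh_sub by blast
  have o: "B x y = 0" using ORTH[OF x y np] .
  have yy: "B y y > 0" using Rd_pos[OF y0] .
  have "2 * B (x + y) y / B y y = 2" using o yy by (simp add: Bsimps)
  hence "x + y - 2 *\<^sub>R y \<in> Rd" using cartan[OF y0 s] by simp
  thus ?thesis by (simp add: scaleR_2 algebra_simps)
qed

lemma PAIR_all:
  assumes x: "x \<in> Sh" and y: "y \<in> Sh" and np: "y \<noteq> x" "y \<noteq> - x" and s: "x + y \<in> Rd"
  shows "x - y \<in> Rd" "- x + y \<in> Rd" "- x - y \<in> Rd"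
proof -
  show xy: "x - y \<in> Rd" by (rule PAIR[OF assms])
  have "- (x - y) \<in> Rd" using Rd_neg[OF xy] .
  thus "- x + y \<in> Rd" by simp
  have "- (x + y) \<in> Rd" using Rd_neg[OF s] .
  thus "- x - y \<in> Rd" by simp
qed

lemma TRANS:
  assumes x: "x \<in> Sh" and y: "y \<in> Sh" and z: "z \<in> Sh"
    and nxy: "y \<noteq> x" "y \<noteq> - x" and nyz: "z \<noteq> y" "z \<noteq> - y" and nxz: "z \<noteq> x" "z \<noteq> - x"
    and s1: "x + y \<in> Rd" and s2: "y + z \<in> Rd"
  shows "x + z \<in> Rd"
proof -
  have bR: "x - y \<in> Rd" using PAIR[OF x y nxy s1] .
  have oxy: "B x y = 0" using ORTH[OF x y nxy] .
  have oyz: "B y z = 0" using ORTH[OF y z nyz] .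
  have oxz: "B x z = 0" using ORTH[OF x z nxz] .
  have yz: "B z z = B y y" using Sh_norm[OF z y] .
  have yy: "B y y > 0" using Rd_pos y Sh_sub by blast
  have gg: "B (y + z) (y + z) = 2 * B y y" using oyz yz Bsym[of z y] by (simp add: Bsimps)
  hence g0: "y + z \<in> Rd - {0}" using s2 yy bilinear_lzero[OF bl] by auto
  have bg: "B (x - y) (y + z) = - B y y" using oxy oxz oyz by (simp add: Bsimps)
  have "2 * B (x - y) (y + z) / B (y + z) (y + z) = -1" using bg gg yy by simp
  hence "(x - y) - (-1) *\<^sub>R (y + z) \<in> Rd" using cartan[OF g0 bR] by simp
  thus ?thesis by (simp add: algebra_simps)
qed

lemma CONN:
  assumes x: "x \<in> Sh" and e0: "e0 \<in> Sh" and np: "x \<noteq> e0" "x \<noteq> - e0"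
  shows "x + e0 \<in> Rd"
proof -
  define K where "K = {x \<in> Sh. x = e0 \<or> x = - e0 \<or> x + e0 \<in> Rd}"
  have e0K: "e0 \<in> K" unfolding K_def using e0 by blast
  have Kneg: "- y \<in> K" if yK: "y \<in> K" for y
  proof -
    have yS: "y \<in> Sh" using yK unfolding K_def by blast
    consider "y = e0" | "y = - e0" | "y \<noteq> e0" "y \<noteq> - e0" "y + e0 \<in> Rd" using yK unfolding K_def by blast
    thus ?thesis
    proof cases
      case 1 thus ?thesis unfolding K_def using Sh_neg e0 by auto
    next
      case 2 thus ?thesis unfolding K_def using e0 by auto
    next
      case 3
      have "e0 \<noteq> y" "e0 \<noteq> - y" using 3 by auto
      moreover have "y + e0 \<in> Rd" using 3 by blast
      ultimately have "- y + e0 \<in> Rd" using PAIR_all(2)[OF yS e0] by blast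
      thus ?thesis unfolding K_def using Sh_neg[OF yS] by blast
    qed
  qed
  have KCL: "u \<in> K" if yK: "y \<in> K" and u: "u \<in> Sh" "u \<noteq> y" "u \<noteq> - y" "u + y \<in> Rd" for y u
  proof -
    have yS: "y \<in> Sh" using yK unfolding K_def by blast
    show ?thesis
    proof (cases "u = e0 \<or> u = - e0")
      case True thus ?thesis unfolding K_def using u(1) by blast
    next
      case False
      consider "y = e0" | "y = - e0" | "y \<noteq> e0" "y \<noteq> - e0" "y + e0 \<in> Rd" using yK unfolding K_def by blast
      thus ?thesis
      proof cases
        case 1 thus ?thesis using u unfolding K_def by blast
      next
        case 2
        have "u - e0 \<in> Rd" using u 2 by simp
        have "e0 \<noteq> u" "e0 \<noteq> - u" using False by auto
        have "u + (- e0) \<in> Rd" using u 2 by simp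
        hence "u - (- e0) \<in> Rd" using PAIR[OF u(1) Sh_neg[OF e0]] False by auto
        thus ?thesis unfolding K_def using u(1) by simp
      next
        case 3
        have "u + e0 \<in> Rd"
          by (rule TRANS[OF u(1) yS e0]) (use u 3 False in \<open>auto simp: add.commute\<close>)
        thus ?thesis unfolding K_def using u(1) by blast
      qed
    qed
  qed
  have Lform: "\<exists>p\<in>K. \<exists>q\<in>K. a = p + q" if aL: "a \<in> Lg" and e: "e \<in> K" "B e a \<noteq> 0" for a e
  proof -
    have eS: "e \<in> Sh" using e unfolding K_def by blast
    obtain p q where pq: "p \<in> Sh" "q \<in> Sh" "q \<noteq> p" "q \<noteq> - p" "a = p + q" "q = e \<or> q = - e"
      using L1[OF aL eS e(2)] by blast
    have qK: "q \<in> K" using pq(6) e(1) Kneg by blast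
    have "p + q \<in> Rd" using pq(5) aL Lg_sub by blast
    hence "p \<in> K" using KCL[OF qK pq(1)] pq(3,4) by (metis minus_minus)
    thus ?thesis using qK pq(5) by blast
  qed
  define A0 where "A0 = K \<union> {a \<in> Lg. \<exists>e\<in>K. B e a \<noteq> 0}"
  define C0 where "C0 = (Rd - {0}) - A0"
  have KS: "K \<subseteq> Sh" unfolding K_def by blast
  have cov: "A0 \<union> C0 = Rd - {0}" unfolding A0_def C0_def using KS Sh_sub Lg_sub by blast
  have orth: "\<forall>a\<in>A0. \<forall>c\<in>C0. B a c = 0"
  proof (intro ballI)
    fix a c assume a: "a \<in> A0" and c: "c \<in> C0"
    have cnK: "c \<notin> K" using c unfolding C0_def A0_def by blast
    show "B a c = 0"
    proof (cases "c \<in> Sh")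
      case cS: True
      have ortK: "B p c = 0" if "p \<in> K" for p
      proof -
        have pS: "p \<in> Sh" using that KS by blast
        have "c \<noteq> p" using cnK that by blast
        moreover have "c \<noteq> - p" using cnK Kneg[OF that] by auto
        ultimately show ?thesis using ORTH[OF pS cS] by blast
      qed
      show ?thesis
      proof (cases "a \<in> K")
        case True thus ?thesis using ortK by blast
      next
        case False
        hence "a \<in> Lg" "\<exists>e\<in>K. B e a \<noteq> 0" using a unfolding A0_def by auto
        then obtain p q where "p \<in> K" "q \<in> K" "a = p + q" using Lform by blast
        thus ?thesis using ortK by (simp add: Bsimps)
      qed
    next
      case False
      hence cL: "c \<in> Lg" using c ShLg unfolding C0_def by blast
      hence ortK: "B p c = 0" if "p \<in> K" for p using c that unfolding C0_def A0_def by blast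
      show ?thesis
      proof (cases "a \<in> K")
        case True thus ?thesis using ortK by blast
      next
        case False
        hence "a \<in> Lg" "\<exists>e\<in>K. B e a \<noteq> 0" using a unfolding A0_def by auto
        then obtain p q where "p \<in> K" "q \<in> K" "a = p + q" using Lform by blast
        thus ?thesis using ortK by (simp add: Bsimps)
      qed
    qed
  qed
  have "A0 \<noteq> {}" using e0K unfolding A0_def by blast
  hence "C0 = {}" using irred[OF cov orth] by blast
  hence "x \<in> A0" using x Sh_sub unfolding C0_def by blast
  hence "x \<in> K" unfolding A0_def using x ShLg_disj by blast
  thus ?thesis using np unfolding K_def by blast
qed

end

lemma sign_cases: "(s::real) \<in> {1, -1} \<Longrightarrow> s = 1 \<or> s = -1" by blast

lemma sign_aux1: "(s::real) \<in> {1, -1} \<Longrightarrow> t \<in> {1, -1} \<Longrightarrow> t *\<^sub>R (v::'a::real_vector) = s *\<^sub>R v \<or> t *\<^sub>R v = - (s *\<^sub>R v)"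
  by (drule sign_cases)+ (elim disjE; simp)

lemma sign_aux2: "(s::real) \<in> {1, -1} \<Longrightarrow> t \<in> {1, -1} \<Longrightarrow> s *\<^sub>R (a::'a::real_vector) = t *\<^sub>R b \<Longrightarrow> b = a \<or> b = - a"
  by (drule sign_cases)+ (elim disjE; simp add: minus_equation_iff)

lemma sign_aux3: "(s::real) \<in> {1, -1} \<Longrightarrow> t \<in> {1, -1} \<Longrightarrow> s *\<^sub>R (a::'a::real_vector) = - (t *\<^sub>R b) \<Longrightarrow> b = a \<or> b = - a"
  by (drule sign_cases)+ (elim disjE; simp add: minus_equation_iff)

context ctxO begin

lemma classify_A1: "Lg = {} \<Longrightarrow> type_A1 Rd"
proof -
  assume L: "Lg = {}"
  obtain a where a: "a \<in> Sh" using Sh_nonempty by blast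
  have a0: "a \<in> Rd - {0}" using a Sh_sub by blast
  have na: "- a \<in> Sh" using Sh_neg[OF a] .
  have na0: "- a \<in> Rd - {0}" using na Sh_sub by blast
  define A0 where "A0 = {a, - a}"
  define C0 where "C0 = (Rd - {0}) - A0"
  have A0sub: "A0 \<subseteq> Rd - {0}" unfolding A0_def
    by (rule insert_subsetI[OF a0], rule insert_subsetI[OF na0], rule empty_subsetI)
  have cov: "A0 \<union> C0 = Rd - {0}" unfolding C0_def using A0sub by blast
  have orth: "\<forall>x\<in>A0. \<forall>c\<in>C0. B x c = 0"
  proof (intro ballI)
    fix x c assume x: "x \<in> A0" and c: "c \<in> C0"
    have cRd: "c \<in> Rd - {0}" and cA: "c \<notin> A0" using c unfolding C0_def by auto
    have cS: "c \<in> Sh" using cRd L ShLg by blast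
    have xS: "x \<in> Sh" using x a na unfolding A0_def by blast
    have "- x \<in> A0" using x unfolding A0_def by auto
    hence "c \<noteq> - x" using cA by metis
    moreover have "c \<noteq> x" using cA x by metis
    ultimately show "B x c = 0" using ORTH[OF xS cS] by blast
  qed
  have "A0 \<noteq> {}" unfolding A0_def by blast
  hence "C0 = {}" using irred[OF cov orth] by blast
  hence sub: "Rd - {0} \<subseteq> A0" unfolding C0_def by blast
  have "Rd = {0, a, - a}"
  proof
    show "Rd \<subseteq> {0, a, - a}" using sub unfolding A0_def by blast
    show "{0, a, - a} \<subseteq> Rd" using Rd0 a0 na0
      by (intro insert_subsetI empty_subsetI) auto
  qed
  moreover have "a \<noteq> 0" using a0 by blast
  ultimately show ?thesis unfolding type_A1_def by blast
qed

lemma classify_B: "Lg \<noteq> {} \<Longrightarrow> type_B Rd"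
proof -
  assume L: "Lg \<noteq> {}"
  define \<sigma> where "\<sigma> x = (SOME y. y = x \<or> y = - x)" for x :: 'a
  have \<sigma>1: "\<sigma> x = x \<or> \<sigma> x = - x" for x unfolding \<sigma>_def by (rule someI[of _ x]) simp
  have \<sigma>2: "\<sigma> (- x) = \<sigma> x" for x
  proof -
    have "(\<lambda>y. y = - x \<or> y = - (- x)) = (\<lambda>y. y = x \<or> y = - x)" by (rule ext) auto
    thus ?thesis unfolding \<sigma>_def by simp
  qed
  define P where "P = {x \<in> Sh. \<sigma> x = x}"
  have PS: "P \<subseteq> Sh" unfolding P_def by blast
  have Pcov: "x \<in> P \<or> - x \<in> P" if "x \<in> Sh" for x
    using \<sigma>1[of x] \<sigma>2[of x] that Sh_neg[OF that] unfolding P_def by auto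
  have Pdisj: "- x \<notin> P" if "x \<in> P" for x
  proof
    assume "- x \<in> P"
    hence "x = - x" using that \<sigma>2[of x] unfolding P_def by auto
    hence "x + x = 0" by (metis add.right_inverse)
    hence "2 *\<^sub>R x = 0" by (simp add: scaleR_2)
    hence "x = 0" by simp
    thus False using that PS Sh_nz by blast
  qed
  have finP: "finite P" using finite_subset[OF _ finRd] PS Sh_sub by blast
  obtain h where h: "bij_betw h {0..<card P} P" using ex_bij_betw_nat_finite[OF finP] by blast
  define l where "l = card P"
  have lt: "{..<l} = {0..<card P}" unfolding l_def by auto
  have inj: "inj_on h {..<l}" using h unfolding lt bij_betw_def by blast
  have img: "h ` {..<l} = P" using h unfolding lt bij_betw_def by blast
  have hP: "h i \<in> P" if "i < l" for i using img that by blast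
  have hS: "h i \<in> Sh" if "i < l" for i using hP[OF that] PS by blast
  have sS: "s *\<^sub>R h i \<in> Sh" if "s \<in> {1, -1}" "i < l" for s :: real and i
    using that hS[OF that(2)] Sh_neg[OF hS[OF that(2)]] by auto
  have hne: "h j \<noteq> h i \<and> h j \<noteq> - h i" if "i < l" "j < l" "i \<noteq> j" for i j
  proof
    show "h j \<noteq> h i" using inj that unfolding inj_on_def by blast
    show "h j \<noteq> - h i" using Pdisj[OF hP[OF that(1)]] hP[OF that(2)] by auto
  qed
  have Srep: "\<exists>s i. s \<in> {1, -1} \<and> i < l \<and> x = s *\<^sub>R h i" if x: "x \<in> Sh" for x
  proof -
    consider "x \<in> P" | "- x \<in> P" using Pcov[OF x] by blast
    thus ?thesis
    proof cases
      case 1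
      then obtain i where "i < l" "x = h i" using img by (metis imageE lessThan_iff)
      thus ?thesis by (intro exI[of _ "1::real"] exI[of _ i]) simp
    next
      case 2
      then obtain i where i: "i < l" "- x = h i" using img by (metis imageE lessThan_iff)
      hence "x = (-1::real) *\<^sub>R h i" by (metis minus_minus scaleR_minus1_left)
      thus ?thesis using i(1) by (intro exI[of _ "-1::real"] exI[of _ i]) simp
    qed
  qed
  have ind: "independent (h ` {..<l})"
  proof
    assume "dependent (h ` {..<l})"
    then obtain t u where tu: "finite t" "t \<subseteq> P" "(\<Sum>v\<in>t. u v *\<^sub>R v) = 0" "\<exists>v\<in>t. u v \<noteq> 0"
      unfolding img dependent_explicit by blast
    then obtain w where w: "w \<in> t" "u w \<noteq> 0" by blast
    have "0 = B (\<Sum>v\<in>t. u v *\<^sub>R v) w" using tu(3) bilinear_lzero[OF bl] by simp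
    also have "\<dots> = (\<Sum>v\<in>t. u v * B v w)" by (rule B_sum_left[OF tu(1)])
    also have "\<dots> = u w * B w w + (\<Sum>v\<in>t - {w}. u v * B v w)" using tu(1) w(1) by (simp add: sum.remove)
    also have "(\<Sum>v\<in>t - {w}. u v * B v w) = 0"
    proof (rule sum.neutral, rule ballI)
      fix v assume v: "v \<in> t - {w}"
      have vP: "v \<in> P" and wP: "w \<in> P" using v w(1) tu(2) by auto
      have "w \<noteq> v" using v by blast
      moreover have "w \<noteq> - v" using Pdisj[OF vP] wP by blast
      ultimately have "B v w = 0" using ORTH vP wP PS by blast
      thus "u v * B v w = 0" by simp
    qed
    finally have "u w * B w w = 0" by simp
    moreover have "B w w > 0" using Rd_pos w(1) tu(2) PS Sh_sub by blast
    ultimately show False using w(2) by simp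
  qed
  have l2: "2 \<le> l"
  proof -
    obtain b where "b \<in> Lg" using L by blast
    then obtain x y where xy: "x \<in> Sh" "y \<in> Sh" "y \<noteq> x" "y \<noteq> - x" using Lg_form by blast
    obtain s i where si: "s \<in> {1, -1}" "i < l" "x = s *\<^sub>R h i" using Srep[OF xy(1)] by blast
    obtain t j where tj: "t \<in> {1, -1}" "j < l" "y = t *\<^sub>R h j" using Srep[OF xy(2)] by blast
    have "i \<noteq> j"
    proof
      assume "i = j"
      hence "y = x \<or> y = - x" using sign_aux1[OF si(1) tj(1), of "h i"] si(3) tj(3) by simp
      thus False using xy(3,4) by blast
    qed
    hence "{i, j} \<subseteq> {..<l}" "card {i, j} = 2" using si tj by auto
    thus ?thesis using card_mono[of "{..<l}" "{i, j}"] by simp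
  qed
  have Rdeq: "Rd = {0} \<union> {s *\<^sub>R h i | s i. s \<in> {1, -1} \<and> i < l}
            \<union> {s *\<^sub>R h i + t *\<^sub>R h j | s t i j. s \<in> {1, -1} \<and> t \<in> {1, -1} \<and> i < l \<and> j < l \<and> i \<noteq> j}"
    (is "Rd = ?D")
  proof
    show "Rd \<subseteq> ?D"
    proof
      fix r assume r: "r \<in> Rd"
      consider "r = 0" | "r \<in> Sh" | "r \<in> Lg" using r ShLg by blast
      thus "r \<in> ?D"
      proof cases
        case 1 thus ?thesis by blast
      next
        case 2 thus ?thesis using Srep by blast
      next
        case 3
        then obtain x y where xy: "x \<in> Sh" "y \<in> Sh" "y \<noteq> x" "y \<noteq> - x" "r = x + y" using Lg_form by blast
        obtain s i where si: "s \<in> {1, -1}" "i < l" "x = s *\<^sub>R h i" using Srep[OF xy(1)] by blast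
        obtain t j where tj: "t \<in> {1, -1}" "j < l" "y = t *\<^sub>R h j" using Srep[OF xy(2)] by blast
        have "i \<noteq> j"
        proof
          assume "i = j"
          hence "y = x \<or> y = - x" using sign_aux1[OF si(1) tj(1), of "h i"] si(3) tj(3) by simp
          thus False using xy(3,4) by blast
        qed
        hence "r = s *\<^sub>R h i + t *\<^sub>R h j \<and> s \<in> {1, -1} \<and> t \<in> {1, -1} \<and> i < l \<and> j < l \<and> i \<noteq> j"
          using si tj xy(5) by simp
        thus ?thesis by blast
      qed
    qed
    show "?D \<subseteq> Rd"
    proof
      fix r assume "r \<in> ?D"
      then consider "r = 0" | "\<exists>s i. s \<in> {1, -1} \<and> i < l \<and> r = s *\<^sub>R h i"
        | "\<exists>s t i j. s \<in> {1, -1} \<and> t \<in> {1, -1} \<and> i < l \<and> j < l \<and> i \<noteq> j \<and> r = s *\<^sub>R h i + t *\<^sub>R h j"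
        by blast
      thus "r \<in> Rd"
      proof cases
        case 1 thus ?thesis using Rd0 by simp
      next
        case 2 thus ?thesis using sS Sh_sub by blast
      next
        case 3
        then obtain s t i j where st: "s \<in> {1, -1}" "t \<in> {1, -1}" "i < l" "j < l" "i \<noteq> j"
          "r = s *\<^sub>R h i + t *\<^sub>R h j" by blast
        have x: "s *\<^sub>R h i \<in> Sh" using sS st by blast
        have y: "t *\<^sub>R h j \<in> Sh" using sS st by blast
        have ne: "h j \<noteq> h i" "h j \<noteq> - h i" using hne st(3,4,5) by auto
        have "s *\<^sub>R h i \<noteq> t *\<^sub>R h j" using sign_aux2[OF st(1,2)] ne by blast
        moreover have "s *\<^sub>R h i \<noteq> - (t *\<^sub>R h j)" using sign_aux3[OF st(1,2)] ne by blast
        ultimately have "s *\<^sub>R h i + t *\<^sub>R h j \<in> Rd" using CONN[OF x y] by blast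
        thus ?thesis using st(6) by simp
      qed
    qed
  qed
  show "type_B Rd" unfolding type_B_def
    by (intro exI[of _ l] exI[of _ h] conjI l2 inj ind Rdeq)
qed

lemma classify: "type_A1 Rd \<or> type_B Rd"
  using classify_A1 classify_B by blast

end

context ctx begin

lemma case1_closed:
  assumes "\<not> type_A1 Rd" "\<not> type_B Rd"
  shows "\<forall>s\<in>S. \<forall>t\<in>S. s + t \<in> S"
proof -
  have "\<not> (\<forall>a b. a \<in> Sh \<longrightarrow> b \<in> Sh \<longrightarrow> b \<noteq> a \<longrightarrow> b \<noteq> - a \<longrightarrow> B a b = 0)"
  proof
    assume h: "\<forall>a b. a \<in> Sh \<longrightarrow> b \<in> Sh \<longrightarrow> b \<noteq> a \<longrightarrow> b \<noteq> - a \<longrightarrow> B a b = 0"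
    have "ctxO B R Rd S L" by (rule ctxO.intro[OF ctx_axioms], unfold_locales) (use h in blast)
    hence "type_A1 Rd \<or> type_B Rd" by (rule ctxO.classify)
    thus False using assms by blast
  qed
  then obtain a b where ab: "a \<in> Sh" "b \<in> Sh" "b \<noteq> a" "b \<noteq> - a" "B a b \<noteq> 0" by blast
  show ?thesis
  proof (cases "B a b < 0")
    case True thus ?thesis using S_closed_of_pair ab by blast
  next
    case False
    hence "B a (- b) < 0" using ab(5) by (simp add: bilinear_rneg[OF bl])
    moreover have "- b \<noteq> a" "- b \<noteq> - a" using ab(3,4) by auto
    ultimately show ?thesis using S_closed_of_pair[OF ab(1) Sh_neg[OF ab(2)]] by blast
  qed
qed

end

theorem proposition7p5:
  fixes B :: "'a::euclidean_space \<Rightarrow> 'a \<Rightarrow> real"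
    and R Rd S L U :: "'a set"
  assumes form: "psd_form B"
    and ears: "ears B R"
    and frs: "finite_root_system B Rd"
    and red: "reduced_rs Rd"
    and sub: "Rd \<subseteq> R"
    and bij: "\<forall>r\<in>R. \<exists>!d. d \<in> Rd \<and> r - d \<in> V0 B R"
    and semS: "semilattice S" and SV0: "S \<subseteq> V0 B R"
    and semL: "semilattice L" and LV0: "L \<subseteq> V0 B R"
    and Rdesc: "R = RSL B Rd S L"
    and R0desc: "R0 B R = msum S S"
    and U: "subgrp U" "U \<subseteq> zspan (R0 B R)"
    and cases:
      "(\<not> type_A1 Rd \<and> \<not> type_B Rd)
       \<or> (type_A1 Rd \<and> (is_lattice S \<or> sl_ind S = zrank (zspan S)))
       \<or> (type_B Rd \<and> (is_lattice S \<or>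
            (\<exists>\<Lambda>1 \<Lambda>2 S1. fg_lattice \<Lambda>1 \<and> fg_lattice \<Lambda>2 \<and> \<Lambda>1 \<inter> \<Lambda>2 = {0} \<and>
                 zspan S = msum \<Lambda>1 \<Lambda>2 \<and> semilattice S1 \<and> zspan S1 = \<Lambda>1 \<and>
                 S = msum S1 \<Lambda>2 \<and> sl_ind S1 = zrank \<Lambda>1)))"
  defines "T \<equiv> msum Rd U \<inter> Rx B R"
  shows "subsystem B R (tildeR B R T) \<and> closed_sub R (tildeR B R T)
         \<and> canonical_sub B Rd (tildeR B R T)"
proof -
  have ctxI: "ctx B R Rd S L"
    unfolding ctx_def using form ears frs red sub semS SV0 semL LV0 Rdesc R0desc by blast
  interpret c: ctx B R Rd S L by (rule ctxI)
  have Tsub: "T \<subseteq> Rx B R" unfolding T_def by blast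
  have TRd: "Rd - {0} \<subseteq> T"
  proof
    fix a assume a: "a \<in> Rd - {0}"
    have "a = a + 0" by simp
    hence "a \<in> msum Rd U" using a subgrp_0[OF U(1)] unfolding msum_def by blast
    thus "a \<in> T" unfolding T_def using c.Rd_Rx[OF a] by blast
  qed
  have LS: "long_roots B Rd \<noteq> {} \<Longrightarrow> L \<subseteq> S" by (rule c.L_sub_S)
  have ctxTI: "ctxT B R Rd S L T"
    by (rule ctxT.intro[OF ctxI], unfold_locales) (use Tsub TRd LS in blast)+
  interpret t: ctxT B R Rd S L T by (rule ctxTI)
  have sgW: "subgrp t.W" by (rule t.sgW)
  have CL: "x \<in> msum t.S' t.S'" if x1: "x \<in> msum S S" and x2: "x \<in> zspan t.S'" for x
  proof -
    have fromclosed: ?thesis if clS: "\<forall>s\<in>S. \<forall>t\<in>S. s + t \<in> S"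
    proof -
      have "subgrp t.S'" unfolding subgrp_def
      proof (intro conjI ballI)
        show "0 \<in> t.S'" by (rule t.S'0)
        fix p q assume p: "p \<in> t.S'" and q: "q \<in> t.S'"
        have "- q \<in> t.S'" using t.S'neg[OF q] .
        hence "p + (- q) \<in> S" using p clS unfolding t.S'_def by blast
        moreover have "p - q \<in> t.W" using p q subgrp_diff[OF sgW] unfolding t.S'_def by blast
        ultimately show "p - q \<in> t.S'" unfolding t.S'_def by simp
      qed
      hence "zspan t.S' = t.S'" by (rule zspan_subgrp_eq)
      hence "x \<in> t.S'" using x2 by blast
      moreover have "x = x + 0" by simp
      ultimately show ?thesis using t.S'0 unfolding msum_def by blast
    qed
    consider "\<not> type_A1 Rd \<and> \<not> type_B Rd" | "is_lattice S"
      | "sl_ind S = zrank (zspan S)"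
      | "\<exists>\<Lambda>1 \<Lambda>2 S1. fg_lattice \<Lambda>1 \<and> fg_lattice \<Lambda>2 \<and> \<Lambda>1 \<inter> \<Lambda>2 = {0} \<and>
                 zspan S = msum \<Lambda>1 \<Lambda>2 \<and> semilattice S1 \<and> zspan S1 = \<Lambda>1 \<and>
                 S = msum S1 \<Lambda>2 \<and> sl_ind S1 = zrank \<Lambda>1"
      using cases by blast
    thus ?thesis
    proof cases
      case 1
      thus ?thesis using fromclosed c.case1_closed by blast
    next
      case 2
      hence "\<forall>s\<in>S. \<forall>t\<in>S. s + t \<in> S" unfolding is_lattice_def using zspan_add by (metis (no_types))
      thus ?thesis using fromclosed by blast
    next
      case 3
      have sg0: "subgrp {0::'a}" unfolding subgrp_def by simp
      have msum0: "S = msum S {0}" unfolding msum_def by auto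
      show ?thesis unfolding t.S'_def
        by (rule parity_closed[OF subgrp_zspan sg0 _ semS refl 3 msum0 sgW x1])
           (use x2 subgrp_0[OF subgrp_zspan] in \<open>auto simp: t.S'_def\<close>)
    next
      case 4
      then obtain L1 L2 S1 where h: "fg_lattice L1" "fg_lattice L2" "L1 \<inter> L2 = {0}"
        "semilattice S1" "zspan S1 = L1" "S = msum S1 L2" "sl_ind S1 = zrank L1" by blast
      have sg1: "subgrp L1" and sg2: "subgrp L2" using h(1,2) unfolding fg_lattice_def by auto
      show ?thesis unfolding t.S'_def
        by (rule parity_closed[OF sg1 sg2 h(3) h(4) h(5) h(7) h(6) sgW x1])
           (use x2 in \<open>simp add: t.S'_def\<close>)
    qed
  qed
  have eq: "tildeR B R T = t.R'" by (rule t.tR_eq)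
  have "subsystem B R t.R'" unfolding subsystem_def using t.R'_sub t.ears_R'[OF CL] by blast
  moreover have "closed_sub R t.R'" unfolding closed_sub_def using t.R'_closed[OF CL] by blast
  moreover have "canonical_sub B Rd t.R'" by (rule t.canonical_R')
  ultimately show ?thesis unfolding eq by blast
qed


end
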